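(* Let $(Q,f)$ be a triangulation quiver with at least three vertices and $\partial(Q,f)$ non-empty, and let $m_\bullet,c_\bullet,b_\bullet$ be weight, parameter and border functions of $(Q,f)$. Assume that $K$ has characteristic different from $2$. Then the algebras $\Lambda(Q,f,m_\bullet,c_\bullet,b_\bullet)$ and $\Lambda(Q,f,m_\bullet,c_\bullet)$ are isomorphic.
   Context: $K$ is an algebraically closed field. A triangulation quiver is $(Q,f)$ with $Q$ a finite connected quiver, each vertex the source and target of exactly two arrows, $f$ a permutation of $Q_1$ with $s(f(\alpha))=t(\alpha)$, $f^3=\mathrm{id}$. $\bar\alpha$ is the other arrow with source $s(\alpha)$, $g(\alpha)=\overline{f(\alpha)}$, $n_\alpha$ the size of the $g$-orbit of $\alpha$. Weight $m_\bullet$ (positive integers) and parameter $c_\bullet$ (in $K^*$) functions on $g$-orbits, values $m_\alpha,c_\alpha$, with $m_\alpha n_\alpha\ge3$. $A_\alpha=(\alpha g(\alpha)\cdots g^{n_\alpha-1}(\alpha))^{m_\alpha-1}\alpha g(\alpha)\cdots g^{n_\alpha-2}(\alpha)$ ($n_\alpha\ge2$), $A_\alpha=\alpha^{m_\alpha-1}$ ($n_\alpha=1$), $B_\alpha=(\alpha g(\alpha)\cdots g^{n_\alpha-1}(\alpha))^{m_\alpha}$. $\Lambda(Q,f,m_\bullet,c_\bullet)=KQ/I$, $I$ generated by $\alpha f(\alpha)-c_{\bar\alpha}A_{\bar\alpha}$ and $\beta f(\beta)g(f(\beta))$ for all arrows. A border vertex is a vertex $i$ with a loop $\alpha$ at $i$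 with $f(\alpha)=\alpha$ (border loop); $\partial(Q,f)$ is the set of border vertices; a border function is any $b_\bullet:\partial(Q,f)\to K$. $\Lambda(Q,f,m_\bullet,c_\bullet,b_\bullet)=KQ/\bar I$, $\bar I$ generated by $\alpha f(\alpha)-c_{\bar\alpha}A_{\bar\alpha}$ for non-border-loop arrows $\alpha$, $\alpha^2-c_{\bar\alpha}A_{\bar\alpha}-b_{s(\alpha)}B_{\bar\alpha}$ for border loops $\alpha$, and $\beta f(\beta)g(f(\beta))$ for all $\beta$. *)

theory Defs
  imports "HOL-Computational_Algebra.Polynomial"
begin

text \<open>A quiver is given by a vertex set Q0, an arrow set Q1 and source/target maps s, t.
  Arrows compose left to right: the path alpha beta means first alpha, then beta
  (so t alpha = s beta).\<close>

definition bar :: "'a set \<Rightarrow> ('a \<Rightarrow> 'v) \<Rightarrow> 'a \<Rightarrow> 'a" where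
  "bar Q1 s \<alpha> = (THE \<beta>. \<beta> \<in> Q1 \<and> s \<beta> = s \<alpha> \<and> \<beta> \<noteq> \<alpha>)"

definition gperm :: "'a set \<Rightarrow> ('a \<Rightarrow> 'v) \<Rightarrow> ('a \<Rightarrow> 'a) \<Rightarrow> 'a \<Rightarrow> 'a" where
  "gperm Q1 s f \<alpha> = bar Q1 s (f \<alpha>)"

definition orbsize :: "'a set \<Rightarrow> ('a \<Rightarrow> 'v) \<Rightarrow> ('a \<Rightarrow> 'a) \<Rightarrow> 'a \<Rightarrow> nat" where
  "orbsize Q1 s f \<alpha> = (LEAST k. 0 < k \<and> (gperm Q1 s f ^^ k) \<alpha> = \<alpha>)"

definition triangulation_quiver ::
  "'v set \<Rightarrow> 'a set \<Rightarrow> ('a \<Rightarrow> 'v) \<Rightarrow> ('a \<Rightarrow> 'v) \<Rightarrow> ('a \<Rightarrow> 'a) \<Rightarrow> bool" where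
  "triangulation_quiver Q0 Q1 s t f \<longleftrightarrow>
     finite Q0 \<and> finite Q1 \<and> Q0 \<noteq> {} \<and>
     (\<forall>a\<in>Q1. s a \<in> Q0 \<and> t a \<in> Q0) \<and>
     (\<forall>i\<in>Q0. card {a\<in>Q1. s a = i} = 2 \<and> card {a\<in>Q1. t a = i} = 2) \<and>
     (\<forall>i\<in>Q0. \<forall>j\<in>Q0. (i, j) \<in> ({(s a, t a) |a. a \<in> Q1} \<union> {(t a, s a) |a. a \<in> Q1})\<^sup>*) \<and>
     bij_betw f Q1 Q1 \<and>
     (\<forall>a\<in>Q1. s (f a) = t a \<and> f (f (f a)) = a)"

definition weight_function :: "'a set \<Rightarrow> ('a \<Rightarrow> 'v) \<Rightarrow> ('a \<Rightarrow> 'a) \<Rightarrow> ('a \<Rightarrow> nat) \<Rightarrow> bool" where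
  "weight_function Q1 s f m \<longleftrightarrow> (\<forall>a\<in>Q1. 0 < m a \<and> m (gperm Q1 s f a) = m a)"

definition parameter_function :: "'a set \<Rightarrow> ('a \<Rightarrow> 'v) \<Rightarrow> ('a \<Rightarrow> 'a) \<Rightarrow> ('a \<Rightarrow> 'k::field) \<Rightarrow> bool" where
  "parameter_function Q1 s f c \<longleftrightarrow> (\<forall>a\<in>Q1. c a \<noteq> 0 \<and> c (gperm Q1 s f a) = c a)"

definition border_loop :: "'a set \<Rightarrow> ('a \<Rightarrow> 'v) \<Rightarrow> ('a \<Rightarrow> 'v) \<Rightarrow> ('a \<Rightarrow> 'a) \<Rightarrow> 'a \<Rightarrow> bool" where
  "border_loop Q1 s t f \<alpha> \<longleftrightarrow> \<alpha> \<in> Q1 \<and> s \<alpha> = t \<alpha> \<and> f \<alpha> = \<alpha>"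

definition border_vertices :: "'a set \<Rightarrow> ('a \<Rightarrow> 'v) \<Rightarrow> ('a \<Rightarrow> 'v) \<Rightarrow> ('a \<Rightarrow> 'a) \<Rightarrow> 'v set" where
  "border_vertices Q1 s t f = {i. \<exists>\<alpha>. border_loop Q1 s t f \<alpha> \<and> s \<alpha> = i}"

text \<open>A path is a pair (v, w): start vertex v and arrow list w (w = [] is the
  trivial path e_v). Elements of KQ are finitely supported K-valued functions on
  valid paths.\<close>

definition valid_path :: "'v set \<Rightarrow> 'a set \<Rightarrow> ('a \<Rightarrow> 'v) \<Rightarrow> ('a \<Rightarrow> 'v) \<Rightarrow> 'v \<times> 'a list \<Rightarrow> bool" where
  "valid_path Q0 Q1 s t p \<longleftrightarrow>
     fst p \<in> Q0 \<and> set (snd p) \<subseteq> Q1 \<and> (snd p \<noteq> [] \<longrightarrow> s (hd (snd p)) = fst p) \<and>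
     (\<forall>i. Suc i < length (snd p) \<longrightarrow> t (snd p ! i) = s (snd p ! Suc i))"

definition pend :: "('a \<Rightarrow> 'v) \<Rightarrow> 'v \<times> 'a list \<Rightarrow> 'v" where
  "pend t p = (if snd p = [] then fst p else t (last (snd p)))"

definition path_alg :: "'v set \<Rightarrow> 'a set \<Rightarrow> ('a \<Rightarrow> 'v) \<Rightarrow> ('a \<Rightarrow> 'v) \<Rightarrow> ('v \<times> 'a list \<Rightarrow> 'k::field) set" where
  "path_alg Q0 Q1 s t = {x. finite {p. x p \<noteq> 0} \<and> (\<forall>p. x p \<noteq> 0 \<longrightarrow> valid_path Q0 Q1 s t p)}"

text \<open>Multiplication = concatenation of paths (zero if not composable).\<close>
definition pmult :: "('a \<Rightarrow> 'v) \<Rightarrow> ('v \<times> 'a list \<Rightarrow> 'k::field) \<Rightarrow> ('v \<times> 'a list \<Rightarrow> 'k) \<Rightarrow> ('v \<times> 'a list \<Rightarrow> 'k)" where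
  "pmult t x y = (\<lambda>(v, w). \<Sum>i\<le>length w. x (v, take i w) * y (pend t (v, take i w), drop i w))"

definition punit :: "'v set \<Rightarrow> ('v \<times> 'a list \<Rightarrow> 'k::field)" where
  "punit Q0 = (\<lambda>(v, w). if v \<in> Q0 \<and> w = [] then 1 else 0)"

definition pbasis :: "'v \<times> 'a list \<Rightarrow> ('v \<times> 'a list \<Rightarrow> 'k::field)" where
  "pbasis p = (\<lambda>q. if q = p then 1 else 0)"

inductive_set ideal_gen :: "('b \<Rightarrow> 'k::field) set \<Rightarrow> (('b \<Rightarrow> 'k) \<Rightarrow> ('b \<Rightarrow> 'k) \<Rightarrow> ('b \<Rightarrow> 'k))
    \<Rightarrow> ('b \<Rightarrow> 'k) set \<Rightarrow> ('b \<Rightarrow> 'k) set"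
  for A mul S where
  base: "x \<in> S \<Longrightarrow> x \<in> ideal_gen A mul S"
| zero: "(\<lambda>_. 0) \<in> ideal_gen A mul S"
| add: "x \<in> ideal_gen A mul S \<Longrightarrow> y \<in> ideal_gen A mul S \<Longrightarrow> (\<lambda>p. x p + y p) \<in> ideal_gen A mul S"
| smult: "x \<in> ideal_gen A mul S \<Longrightarrow> (\<lambda>p. c * x p) \<in> ideal_gen A mul S"
| lmult: "a \<in> A \<Longrightarrow> x \<in> ideal_gen A mul S \<Longrightarrow> mul a x \<in> ideal_gen A mul S"
| rmult: "a \<in> A \<Longrightarrow> x \<in> ideal_gen A mul S \<Longrightarrow> mul x a \<in> ideal_gen A mul S"

text \<open>K-algebra isomorphism A/I \<cong> A/J, expressed via a K-linear map phi : A \<rightarrow> A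
  inducing a unital, multiplicative bijection A/I \<rightarrow> A/J.\<close>
definition quot_alg_iso :: "('b \<Rightarrow> 'k::field) set \<Rightarrow> (('b \<Rightarrow> 'k) \<Rightarrow> ('b \<Rightarrow> 'k) \<Rightarrow> ('b \<Rightarrow> 'k))
    \<Rightarrow> ('b \<Rightarrow> 'k) \<Rightarrow> ('b \<Rightarrow> 'k) set \<Rightarrow> ('b \<Rightarrow> 'k) set \<Rightarrow> bool" where
  "quot_alg_iso A mul one I J \<longleftrightarrow>
    (\<exists>\<phi>. (\<forall>x\<in>A. \<phi> x \<in> A) \<and>
         (\<forall>x\<in>A. \<forall>y\<in>A. \<phi> (\<lambda>p. x p + y p) = (\<lambda>p. \<phi> x p + \<phi> y p)) \<and>
         (\<forall>c. \<forall>x\<in>A. \<phi> (\<lambda>p. c * x p) = (\<lambda>p. c * \<phi> x p)) \<and>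
         (\<forall>x\<in>A. \<forall>y\<in>A. (\<lambda>p. \<phi> (mul x y) p - mul (\<phi> x) (\<phi> y) p) \<in> J) \<and>
         (\<lambda>p. \<phi> one p - one p) \<in> J \<and>
         (\<forall>x\<in>A. \<phi> x \<in> J \<longleftrightarrow> x \<in> I) \<and>
         (\<forall>y\<in>A. \<exists>x\<in>A. (\<lambda>p. \<phi> x p - y p) \<in> J))"

definition gcycle :: "'a set \<Rightarrow> ('a \<Rightarrow> 'v) \<Rightarrow> ('a \<Rightarrow> 'a) \<Rightarrow> 'a \<Rightarrow> 'a list" where
  "gcycle Q1 s f \<alpha> = map (\<lambda>k. (gperm Q1 s f ^^ k) \<alpha>) [0..<orbsize Q1 s f \<alpha>]"

text \<open>A_alpha: for n_alpha = 1 this is alpha^(m_alpha - 1), since take 0 = [].\<close>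
definition Apath :: "'a set \<Rightarrow> ('a \<Rightarrow> 'v) \<Rightarrow> ('a \<Rightarrow> 'a) \<Rightarrow> ('a \<Rightarrow> nat) \<Rightarrow> 'a \<Rightarrow> 'a list" where
  "Apath Q1 s f m \<alpha> = concat (replicate (m \<alpha> - 1) (gcycle Q1 s f \<alpha>)) @
                        take (orbsize Q1 s f \<alpha> - 1) (gcycle Q1 s f \<alpha>)"

definition Bpath :: "'a set \<Rightarrow> ('a \<Rightarrow> 'v) \<Rightarrow> ('a \<Rightarrow> 'a) \<Rightarrow> ('a \<Rightarrow> nat) \<Rightarrow> 'a \<Rightarrow> 'a list" where
  "Bpath Q1 s f m \<alpha> = concat (replicate (m \<alpha>) (gcycle Q1 s f \<alpha>))"

definition zero_rels :: "'a set \<Rightarrow> ('a \<Rightarrow> 'v) \<Rightarrow> ('a \<Rightarrow> 'a) \<Rightarrow> ('v \<times> 'a list \<Rightarrow> 'k::field) set" where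
  "zero_rels Q1 s f = {pbasis (s \<beta>, [\<beta>, f \<beta>, gperm Q1 s f (f \<beta>)]) | \<beta>. \<beta> \<in> Q1}"

definition gens_I :: "'a set \<Rightarrow> ('a \<Rightarrow> 'v) \<Rightarrow> ('a \<Rightarrow> 'a) \<Rightarrow> ('a \<Rightarrow> nat) \<Rightarrow> ('a \<Rightarrow> 'k::field)
    \<Rightarrow> ('v \<times> 'a list \<Rightarrow> 'k) set" where
  "gens_I Q1 s f m c =
     {(\<lambda>p. pbasis (s \<alpha>, [\<alpha>, f \<alpha>]) p
           - c (bar Q1 s \<alpha>) * pbasis (s (bar Q1 s \<alpha>), Apath Q1 s f m (bar Q1 s \<alpha>)) p) | \<alpha>. \<alpha> \<in> Q1}
     \<union> zero_rels Q1 s f"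

definition gens_Ibar :: "'a set \<Rightarrow> ('a \<Rightarrow> 'v) \<Rightarrow> ('a \<Rightarrow> 'v) \<Rightarrow> ('a \<Rightarrow> 'a) \<Rightarrow> ('a \<Rightarrow> nat)
    \<Rightarrow> ('a \<Rightarrow> 'k::field) \<Rightarrow> ('v \<Rightarrow> 'k) \<Rightarrow> ('v \<times> 'a list \<Rightarrow> 'k) set" where
  "gens_Ibar Q1 s t f m c b =
     {(\<lambda>p. pbasis (s \<alpha>, [\<alpha>, f \<alpha>]) p
           - c (bar Q1 s \<alpha>) * pbasis (s (bar Q1 s \<alpha>), Apath Q1 s f m (bar Q1 s \<alpha>)) p)
        | \<alpha>. \<alpha> \<in> Q1 \<and> \<not> border_loop Q1 s t f \<alpha>}
     \<union> {(\<lambda>p. pbasis (s \<alpha>, [\<alpha>, \<alpha>]) p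
           - c (bar Q1 s \<alpha>) * pbasis (s (bar Q1 s \<alpha>), Apath Q1 s f m (bar Q1 s \<alpha>)) p
           - b (s \<alpha>) * pbasis (s (bar Q1 s \<alpha>), Bpath Q1 s f m (bar Q1 s \<alpha>)) p)
        | \<alpha>. border_loop Q1 s t f \<alpha>}
     \<union> zero_rels Q1 s f"

definition idealI where
  "idealI Q0 Q1 s t f m c = ideal_gen (path_alg Q0 Q1 s t) (pmult t) (gens_I Q1 s f m c)"

definition idealIbar where
  "idealIbar Q0 Q1 s t f m c b = ideal_gen (path_alg Q0 Q1 s t) (pmult t) (gens_Ibar Q1 s t f m c b)"

end

theory Submission
  imports Defs "HOL-Library.Function_Algebras"
begin

definition K :: "'k \<Rightarrow> 'b \<Rightarrow> 'k" where "K c = (\<lambda>_. c)"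

lemma K_apply[simp]: "K c x = c" by (simp add: K_def)

lemma pmult_add_left: "pmult t (x + y) z = pmult t x z + pmult t y z"
  by (rule ext) (auto simp: pmult_def sum.distrib algebra_simps)

lemma pmult_add_right: "pmult t z (x + y) = pmult t z x + pmult t z y"
  by (rule ext) (auto simp: pmult_def sum.distrib algebra_simps)

lemma pmult_diff_left: "pmult t (x - y) z = pmult t x z - pmult t y z"
  by (rule ext) (auto simp: pmult_def sum_subtractf algebra_simps)

lemma pmult_diff_right: "pmult t z (x - y) = pmult t z x - pmult t z y"
  by (rule ext) (auto simp: pmult_def sum_subtractf algebra_simps)

lemma pmult_K_left: "pmult t (K c * x) z = K c * pmult t x z"
  by (rule ext) (auto simp: pmult_def sum_distrib_left algebra_simps)

lemma pmult_K_right: "pmult t z (K c * x) = K c * pmult t z x"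
  by (rule ext) (auto simp: pmult_def sum_distrib_left algebra_simps)

lemma pmult_zero_left[simp]: "pmult t 0 z = 0"
  by (rule ext) (auto simp: pmult_def)

lemma pmult_zero_right[simp]: "pmult t z 0 = 0"
  by (rule ext) (auto simp: pmult_def)

lemma pmult_sum_left:
  "pmult t (\<lambda>r. \<Sum>i\<in>S. g i r) y = (\<lambda>r. \<Sum>i\<in>S. pmult t (g i) y r)"
  by (rule ext) (auto simp: pmult_def sum_distrib_right intro: sum.swap)

lemma pmult_sum_right:
  "pmult t y (\<lambda>r. \<Sum>i\<in>S. g i r) = (\<lambda>r. \<Sum>i\<in>S. pmult t y (g i) r)"
  by (rule ext) (auto simp: pmult_def sum_distrib_left intro: sum.swap)

lemma pend_Nil[simp]: "pend t (u, []) = u" by (simp add: pend_def)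

lemma pend_Cons[simp]: "pend t (u, a # w) = pend t (t a, w)" by (simp add: pend_def)

lemma pend_take_drop:
  assumes "j + k \<le> length w"
  shows "pend t (pend t (v, take j w), take k (drop j w)) = pend t (v, take (j+k) w)"
proof (cases "k = 0")
  case True then show ?thesis by simp
next
  case False
  then have ne1: "take k (drop j w) \<noteq> []" and ne2: "take (j+k) w \<noteq> []" using assms by auto
  have "last (take k (drop j w)) = w ! (j+k-1)"
    using ne1 assms False by (simp add: last_conv_nth nth_drop)
  moreover have "last (take (j+k) w) = w ! (j+k-1)"
    using ne2 assms False by (simp add: last_conv_nth)
  ultimately show ?thesis using ne1 ne2 by (simp add: pend_def)
qed

lemma pmult_assoc:
  fixes x y z :: "'v \<times> 'a list \<Rightarrow> 'k::field" and t :: "'a \<Rightarrow> 'v"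
  shows "pmult t (pmult t x y) z = pmult t x (pmult t y z)"
proof (rule ext, clarify)
  fix v :: 'v and w :: "'a list"
  let ?n = "length w"
  define G where "G j k = x (v, take j w) * y (pend t (v, take j w), take k (drop j w)) *
      z (pend t (v, take (j+k) w), drop (j+k) w)" for j k
  have L: "pmult t (pmult t x y) z (v, w) = (\<Sum>i\<le>?n. \<Sum>j\<le>i. G j (i - j))"
    unfolding pmult_def
    apply (simp add: sum_distrib_right)
    apply (rule sum.cong[OF refl])
    apply (rule sum.cong)
     apply (auto simp: G_def min_def take_drop)
    done
  have R: "pmult t x (pmult t y z) (v, w) = (\<Sum>j\<le>?n. \<Sum>k\<le>?n - j. G j k)"
    unfolding pmult_def
    apply (simp add: sum_distrib_left)
    apply (rule sum.cong[OF refl])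
    apply (rule sum.cong[OF refl])
    apply (simp add: G_def pend_take_drop)
    apply (metis add.commute)
    done
  have "(\<Sum>i\<le>?n. \<Sum>j\<le>i. G j (i - j)) = (\<Sum>(j,k)\<in>{(j,k). j+k \<le> ?n}. G j k)"
    by (rule sum.triangle_reindex_eq[symmetric])
  also have "{(j,k). j+k \<le> ?n} = Sigma {..?n} (\<lambda>j. {..?n - j})" by auto
  also have "(\<Sum>(j,k)\<in>Sigma {..?n} (\<lambda>j. {..?n - j}). G j k) = (\<Sum>j\<le>?n. \<Sum>k\<le>?n - j. G j k)"
    by (rule sum.Sigma[symmetric]) auto
  finally show "pmult t (pmult t x y) z (v, w) = pmult t x (pmult t y z) (v, w)" using L R by simp
qed

lemma take_drop_eq_iff:
  "i \<le> length w'' \<Longrightarrow> (take i w'' = w \<and> drop i w'' = w') \<longleftrightarrow> (i = length w \<and> w'' = w @ w')"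
proof
  assume i: "i \<le> length w''" and h: "take i w'' = w \<and> drop i w'' = w'"
  then have "w'' = w @ w'" by (metis append_take_drop_id)
  moreover have "length w = i" using h i by (metis length_take min.absorb2)
  ultimately show "i = length w \<and> w'' = w @ w'" by simp
next
  assume "i = length w \<and> w'' = w @ w'"
  then show "take i w'' = w \<and> drop i w'' = w'" by simp
qed

lemma pb_mult:
  "pmult t (pbasis (v,w)) (pbasis (u,w')) = (if u = pend t (v,w) then pbasis (v, w@w') else 0)"
proof (rule ext, clarify)
  fix v' w''
  have "pmult t (pbasis (v,w)) (pbasis (u,w')) (v', w'') =
     (\<Sum>i\<le>length w''. if i = length w then (if v' = v \<and> w'' = w @ w' \<and> u = pend t (v,w) then 1 else 0) else 0)"
    unfolding pmult_def
  proof (simp only: prod.case, rule sum.cong[OF refl])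
    fix i assume "i \<in> {..length w''}"
    then have i: "i \<le> length w''" by simp
    show "pbasis (v, w) (v', take i w'') * pbasis (u, w') (pend t (v', take i w''), drop i w'') =
      (if i = length w then (if v' = v \<and> w'' = w @ w' \<and> u = pend t (v,w) then 1 else 0) else 0)"
    proof (cases "take i w'' = w \<and> drop i w'' = w'")
      case True
      then have "i = length w" "w'' = w @ w'" using take_drop_eq_iff[OF i, of w w'] by auto
      then show ?thesis using True by (simp add: pbasis_def)
    next
      case False
      then have "\<not> (i = length w \<and> w'' = w @ w')" using take_drop_eq_iff[OF i, of w w'] by blast
      then show ?thesis using False unfolding pbasis_def by auto
    qed
  qed
  also have "\<dots> = (if u = pend t (v,w) then pbasis (v, w@w') else 0) (v', w'')"
    by (simp add: pbasis_def)
  finally show "pmult t (pbasis (v,w)) (pbasis (u,w')) (v', w'') =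
     (if u = pend t (v,w) then pbasis (v, w@w') else 0) (v', w'')" .
qed

lemma e_left:
  "pmult t (pbasis (v,[])) x = (\<lambda>(u,w). if u = v then x (u,w) else 0)"
proof (rule ext, clarify)
  fix u w
  have "pmult t (pbasis (v,[])) x (u,w) = (\<Sum>i\<le>length w. if i = 0 then (if u = v then x (u,w) else 0) else 0)"
    unfolding pmult_def by (simp only: prod.case, intro sum.cong) (auto simp: pbasis_def)
  then show "pmult t (pbasis (v,[])) x (u,w) = (if u = v then x (u,w) else 0)" by simp
qed

lemma e_right:
  "pmult t x (pbasis (v,[])) = (\<lambda>p. if pend t p = v then x p else 0)"
proof (rule ext, clarify)
  fix u w
  have "pmult t x (pbasis (v,[])) (u,w) = (\<Sum>i\<le>length w. if i = length w then (if pend t (u,w) = v then x (u,w) else 0) else 0)"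
    unfolding pmult_def by (simp only: prod.case, intro sum.cong) (auto simp: pbasis_def)
  then show "pmult t x (pbasis (v,[])) (u,w) = (if pend t (u,w) = v then x (u,w) else 0)" by simp
qed

definition fsupp :: "('b \<Rightarrow> 'k::zero) \<Rightarrow> bool" where
  "fsupp x \<longleftrightarrow> finite {p. x p \<noteq> 0}"

lemma fsupp_pbasis[simp]: "fsupp (pbasis p)"
proof -
  have "{q. pbasis p q \<noteq> (0::'k::field)} \<subseteq> {p}" by (auto simp: pbasis_def)
  then show ?thesis unfolding fsupp_def by (rule finite_subset) simp
qed

lemma fsupp_zero[simp]: "fsupp 0" by (simp add: fsupp_def)

lemma fsupp_add[simp]: "fsupp x \<Longrightarrow> fsupp y \<Longrightarrow> fsupp (x + (y::'b \<Rightarrow> 'k::field))"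
  unfolding fsupp_def
  by (rule finite_subset[of _ "{p. x p \<noteq> 0} \<union> {p. y p \<noteq> 0}"]) auto

lemma fsupp_diff[simp]: "fsupp x \<Longrightarrow> fsupp y \<Longrightarrow> fsupp (x - (y::'b \<Rightarrow> 'k::ab_group_add))"
  unfolding fsupp_def
  by (rule finite_subset[of _ "{p. x p \<noteq> 0} \<union> {p. y p \<noteq> 0}"]) auto

lemma fsupp_K[simp]: "fsupp x \<Longrightarrow> fsupp (K c * (x::'b \<Rightarrow> 'k::field))"
  unfolding fsupp_def
  by (rule finite_subset[of _ "{p. x p \<noteq> 0}"]) auto

lemma pmult_nonzero:
  assumes "pmult t x y (v, w) \<noteq> 0"
  shows "\<exists>i\<le>length w. x (v, take i w) \<noteq> 0 \<and> y (pend t (v, take i w), drop i w) \<noteq> 0"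
proof -
  from assms obtain i where "i \<in> {..length w}" "x (v, take i w) * y (pend t (v, take i w), drop i w) \<noteq> 0"
    unfolding pmult_def by (auto elim: sum.not_neutral_contains_not_neutral)
  then show ?thesis by auto
qed

lemma fsupp_pmult[simp]:
  assumes "fsupp x" "fsupp y"
  shows "fsupp (pmult t x y)"
proof -
  have "{p. pmult t x y p \<noteq> 0} \<subseteq> (\<lambda>(p,q). (fst p, snd p @ snd q)) ` ({p. x p \<noteq> 0} \<times> {q. y q \<noteq> 0})"
  proof clarify
    fix v w assume "pmult t x y (v, w) \<noteq> 0"
    from pmult_nonzero[OF this] obtain i where i: "i \<le> length w" "x (v, take i w) \<noteq> 0"
      "y (pend t (v, take i w), drop i w) \<noteq> 0" by blast
    then show "(v, w) \<in> (\<lambda>(p,q). (fst p, snd p @ snd q)) ` ({p. x p \<noteq> 0} \<times> {q. y q \<noteq> 0})"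
      by (intro image_eqI[of _ _ "((v, take i w), (pend t (v, take i w), drop i w))"]) auto
  qed
  then show ?thesis using assms unfolding fsupp_def by (meson finite_SigmaI finite_imageI finite_subset)
qed

lemma fsupp_sum: "finite S \<Longrightarrow> (\<And>i. i \<in> S \<Longrightarrow> fsupp (g i)) \<Longrightarrow> fsupp (\<lambda>r. \<Sum>i\<in>S. (g i r :: 'k::field))"
proof (induction S rule: finite_induct)
  case empty then show ?case by (simp add: fsupp_def)
next
  case (insert a S)
  have "(\<lambda>r. \<Sum>i\<in>insert a S. g i r) = g a + (\<lambda>r. \<Sum>i\<in>S. g i r)"
    using insert by (auto simp: fun_eq_iff)
  then show ?case using insert by simp
qed

lemma valid_append:
  assumes v1: "valid_path Q0 Q1 s t (v, w1)" and v2: "valid_path Q0 Q1 s t (pend t (v, w1), w2)"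
  shows "valid_path Q0 Q1 s t (v, w1 @ w2)"
  unfolding valid_path_def fst_conv snd_conv
proof (intro conjI allI impI)
  show "v \<in> Q0" using v1 by (simp add: valid_path_def)
  show "set (w1 @ w2) \<subseteq> Q1" using v1 v2 by (simp add: valid_path_def)
  show "s (hd (w1 @ w2)) = v" if "w1 @ w2 \<noteq> []"
    using v1 v2 that by (cases w1) (auto simp: valid_path_def)
  fix i assume i: "Suc i < length (w1 @ w2)"
  consider "Suc i < length w1" | "Suc i = length w1" | "length w1 \<le> i" by linarith
  then show "t ((w1 @ w2) ! i) = s ((w1 @ w2) ! Suc i)"
  proof cases
    case 1 then show ?thesis using v1 by (simp add: valid_path_def nth_append)
  next
    case 2
    then have ne: "w1 \<noteq> []" "w2 \<noteq> []" using i by auto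
    have "(w1 @ w2) ! i = last w1" using 2 ne by (simp add: nth_append last_conv_nth flip: 2)
    moreover have "(w1 @ w2) ! Suc i = hd w2" using 2 ne by (simp add: nth_append hd_conv_nth)
    moreover have "s (hd w2) = t (last w1)" using v2 ne by (simp add: valid_path_def pend_def)
    ultimately show ?thesis by simp
  next
    case 3
    then have "Suc (i - length w1) < length w2" using i by auto
    then have "t (w2 ! (i - length w1)) = s (w2 ! Suc (i - length w1))"
      using v2 by (simp add: valid_path_def)
    moreover have "Suc i - length w1 = Suc (i - length w1)" using 3 by simp
    ultimately show ?thesis using 3 by (simp add: nth_append)
  qed
qed

lemma valid_take:
  assumes "valid_path Q0 Q1 s t (v, w)"
  shows "valid_path Q0 Q1 s t (v, take i w)"
  using assms unfolding valid_path_def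
  by (auto dest: in_set_takeD simp: hd_take)

lemma valid_pend_Q0:
  assumes "valid_path Q0 Q1 s t (v, w)" "\<forall>a\<in>Q1. t a \<in> Q0"
  shows "pend t (v, w) \<in> Q0"
proof (cases "w = []")
  case False
  then have "last w \<in> Q1" using assms(1) last_in_set[OF False] by (auto simp: valid_path_def)
  then show ?thesis using assms(2) False by (simp add: pend_def)
qed (use assms in \<open>auto simp: valid_path_def\<close>)

lemma valid_drop:
  assumes "valid_path Q0 Q1 s t (v, w)" "\<forall>a\<in>Q1. t a \<in> Q0"
  shows "valid_path Q0 Q1 s t (pend t (v, take i w), drop i w)"
proof -
  have Q: "pend t (v, take i w) \<in> Q0" using valid_pend_Q0[OF valid_take[OF assms(1)] assms(2)] .
  show ?thesis unfolding valid_path_def fst_conv snd_conv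
  proof (intro conjI allI impI)
    show "pend t (v, take i w) \<in> Q0" by (fact Q)
    show "set (drop i w) \<subseteq> Q1" using assms(1) by (auto simp: valid_path_def dest: in_set_dropD)
    show "s (hd (drop i w)) = pend t (v, take i w)" if "drop i w \<noteq> []"
    proof (cases "i = 0")
      case True then show ?thesis using assms(1) that by (simp add: valid_path_def)
    next
      case False
      then have "take i w \<noteq> []" "i < length w" using that by auto
      then have "pend t (v, take i w) = t (w ! (i - 1))"
        by (simp add: pend_def last_conv_nth)
      moreover have "hd (drop i w) = w ! i" using that by (simp add: hd_drop_conv_nth)
      moreover have "t (w ! (i-1)) = s (w ! Suc (i - 1))" using assms(1) \<open>i < length w\<close> False
        by (simp add: valid_path_def)
      ultimately show ?thesis using False by simp
    qed
    fix j assume "Suc j < length (drop i w)"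
    then show "t (drop i w ! j) = s (drop i w ! Suc j)" using assms(1)
      by (auto simp: valid_path_def)
  qed
qed

lemma A_iff: "x \<in> path_alg Q0 Q1 s t \<longleftrightarrow> fsupp x \<and> (\<forall>p. x p \<noteq> 0 \<longrightarrow> valid_path Q0 Q1 s t p)"
  by (simp add: path_alg_def fsupp_def)

lemma A_pbasis: "valid_path Q0 Q1 s t p \<Longrightarrow> pbasis p \<in> path_alg Q0 Q1 s t"
  using fsupp_pbasis[of p] by (auto simp: A_iff pbasis_def)

lemma A_zero[simp]: "0 \<in> path_alg Q0 Q1 s t"
  by (simp add: A_iff)

lemma A_add: "x \<in> path_alg Q0 Q1 s t \<Longrightarrow> y \<in> path_alg Q0 Q1 s t \<Longrightarrow> x + y \<in> path_alg Q0 Q1 s t"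
  by (auto simp: A_iff) (metis add.right_neutral add_0)

lemma A_diff: "x \<in> path_alg Q0 Q1 s t \<Longrightarrow> y \<in> path_alg Q0 Q1 s t \<Longrightarrow> x - y \<in> path_alg Q0 Q1 s t"
  by (auto simp: A_iff) (metis diff_0 diff_zero neg_equal_0_iff_equal)

lemma A_K: "x \<in> path_alg Q0 Q1 s t \<Longrightarrow> K c * x \<in> path_alg Q0 Q1 s t"
  by (auto simp: A_iff)

lemma A_pmult:
  assumes "x \<in> path_alg Q0 Q1 s t" "y \<in> path_alg Q0 Q1 s t" "\<forall>a\<in>Q1. t a \<in> Q0"
  shows "pmult t x y \<in> path_alg Q0 Q1 s t"
  unfolding A_iff
proof (intro conjI allI impI)
  show "fsupp (pmult t x y)" using assms by (simp add: A_iff)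
  fix p assume "pmult t x y p \<noteq> 0"
  then obtain v w where p: "p = (v, w)" and nz: "pmult t x y (v, w) \<noteq> 0" by (cases p) auto
  from pmult_nonzero[OF nz] obtain i where i: "i \<le> length w" "x (v, take i w) \<noteq> 0"
      "y (pend t (v, take i w), drop i w) \<noteq> 0" by blast
  then have "valid_path Q0 Q1 s t (v, take i w)" "valid_path Q0 Q1 s t (pend t (v, take i w), drop i w)"
    using assms by (auto simp: A_iff)
  from valid_append[OF this] show "valid_path Q0 Q1 s t p" using p by simp
qed

lemma A_sum: "finite S \<Longrightarrow> (\<And>i. i \<in> S \<Longrightarrow> g i \<in> path_alg Q0 Q1 s t) \<Longrightarrow>
   (\<lambda>r. \<Sum>i\<in>S. g i r) \<in> path_alg Q0 Q1 s t"
proof (induction S rule: finite_induct)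
  case empty then show ?case using A_zero by (simp add: zero_fun_def)
next
  case (insert a S)
  have "(\<lambda>r. \<Sum>i\<in>insert a S. g i r) = g a + (\<lambda>r. \<Sum>i\<in>S. g i r)"
    using insert by (auto simp: fun_eq_iff)
  then show ?case using insert by (simp add: A_add)
qed

lemma id_add: "x \<in> ideal_gen A mul S \<Longrightarrow> y \<in> ideal_gen A mul S \<Longrightarrow> x + y \<in> ideal_gen A mul S"
  using ideal_gen.add[of x A mul S y] by (simp add: plus_fun_def)

lemma id_K: "x \<in> ideal_gen A mul S \<Longrightarrow> K c * x \<in> ideal_gen A mul S"
  using ideal_gen.smult[of x A mul S c] by (simp add: times_fun_def K_def)

lemma id_zero: "0 \<in> ideal_gen A mul S"
  using ideal_gen.zero[of A mul S] by (simp add: zero_fun_def)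

lemma id_neg: "x \<in> ideal_gen A mul S \<Longrightarrow> - x \<in> ideal_gen A mul S"
proof -
  assume "x \<in> ideal_gen A mul S"
  moreover have "K (-1) * x = - x" by (rule ext) simp
  ultimately show ?thesis using id_K[of x A mul S "-1"] by metis
qed

lemma id_diff: "x \<in> ideal_gen A mul S \<Longrightarrow> y \<in> ideal_gen A mul S \<Longrightarrow> x - y \<in> ideal_gen A mul S"
proof -
  assume "x \<in> ideal_gen A mul S" "y \<in> ideal_gen A mul S"
  then have "x + - y \<in> ideal_gen A mul S" using id_add id_neg by blast
  then show ?thesis by (metis diff_conv_add_uminus)
qed

lemma id_sum: "finite T \<Longrightarrow> (\<And>i. i \<in> T \<Longrightarrow> g i \<in> ideal_gen A mul S) \<Longrightarrow> (\<lambda>r. \<Sum>i\<in>T. g i r) \<in> ideal_gen A mul S"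
proof (induction T rule: finite_induct)
  case empty then show ?case using id_zero by (simp add: zero_fun_def)
next
  case (insert a T)
  have "(\<lambda>r. \<Sum>i\<in>insert a T. g i r) = g a + (\<lambda>r. \<Sum>i\<in>T. g i r)"
    using insert by (auto simp: fun_eq_iff)
  then show ?case using insert by (simp add: id_add)
qed

definition cg :: "('b \<Rightarrow> 'k::field) set \<Rightarrow> ('b \<Rightarrow> 'k) \<Rightarrow> ('b \<Rightarrow> 'k) \<Rightarrow> bool" where
  "cg I x y \<longleftrightarrow> x - y \<in> I"

lemma pmult_zero_right'[simp]: "pmult t z (\<lambda>_. 0) = (\<lambda>_. 0)"
  by (rule ext) (auto simp: pmult_def)

lemma pmult_zero_left'[simp]: "pmult t (\<lambda>_. 0) z = (\<lambda>_. 0)"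
  by (rule ext) (auto simp: pmult_def)

lemma pmult_sc_left: "pmult t (\<lambda>r. c * x r) z = (\<lambda>r. c * pmult t x z r)"
  using pmult_K_left[of t c x z] by (simp add: times_fun_def)

lemma pmult_sc_right: "pmult t z (\<lambda>r. c * x r) = (\<lambda>r. c * pmult t z x r)"
  using pmult_K_right[of t z c x] by (simp add: times_fun_def)

lemma fsupp_sc[simp]: "fsupp x \<Longrightarrow> fsupp (\<lambda>r. c * (x r::'k::field))"
  using fsupp_K[of x c] by (simp add: times_fun_def)

lemma A_sc: "x \<in> path_alg Q0 Q1 s t \<Longrightarrow> (\<lambda>r. c * x r) \<in> path_alg Q0 Q1 s t"
  using A_K[of x Q0 Q1 s t c] by (simp add: times_fun_def)

lemma valid_single: "a \<in> Q1 \<Longrightarrow> s a \<in> Q0 \<Longrightarrow> valid_path Q0 Q1 s t (s a, [a])"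
  by (simp add: valid_path_def)

lemma valid_rep: "a \<in> Q1 \<Longrightarrow> s a \<in> Q0 \<Longrightarrow> s a = t a \<Longrightarrow> valid_path Q0 Q1 s t (s a, replicate k a)"
  by (auto simp: valid_path_def hd_replicate set_replicate_conv_if)

locale phimap =
  fixes s t :: "'a \<Rightarrow> 'v" and mu2 mu3 :: "'a \<Rightarrow> 'k::field"
begin

definition img :: "'a \<Rightarrow> 'v \<times> 'a list \<Rightarrow> 'k" where
  "img a = pbasis (s a, [a]) + K (mu2 a) * pbasis (s a, [a, a]) + K (mu3 a) * pbasis (s a, [a, a, a])"

primrec PhiL :: "'a list \<Rightarrow> 'v \<Rightarrow> 'v \<times> 'a list \<Rightarrow> 'k" where
  "PhiL [] v = pbasis (v, [])"
| "PhiL (a # w) v = (if v = s a then pmult t (img a) (PhiL w (t a)) else 0)"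

definition Phi :: "'v \<times> 'a list \<Rightarrow> 'v \<times> 'a list \<Rightarrow> 'k" where
  "Phi p = PhiL (snd p) (fst p)"

definition phi :: "('v \<times> 'a list \<Rightarrow> 'k) \<Rightarrow> 'v \<times> 'a list \<Rightarrow> 'k" where
  "phi x = (\<lambda>r. \<Sum>q\<in>{q. x q \<noteq> 0}. x q * Phi q r)"

lemma Phi_Nil[simp]: "Phi (v, []) = pbasis (v, [])" by (simp add: Phi_def)

lemma Phi_Cons: "Phi (v, a # w) = (if v = s a then pmult t (img a) (Phi (t a, w)) else 0)"
  by (simp add: Phi_def)

lemma img_start: "img a (v', w') \<noteq> 0 \<Longrightarrow> v' = s a"
  by (auto simp: img_def pbasis_def split: if_splits)

lemma Phi_start: "Phi (u, w) (v', w') \<noteq> 0 \<Longrightarrow> v' = u"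
proof (induction w arbitrary: u v' w')
  case Nil then show ?case by (simp add: pbasis_def split: if_splits)
next
  case (Cons a w)
  then have u: "u = s a" and nz: "pmult t (img a) (Phi (t a, w)) (v', w') \<noteq> 0"
    by (auto simp: Phi_Cons split: if_splits)
  from pmult_nonzero[OF nz] obtain i where "img a (v', take i w') \<noteq> 0" by blast
  then show ?case using u img_start by blast
qed

lemma Phi_mult:
  "pmult t (Phi (v, w1)) (Phi (u, w2)) = (if u = pend t (v, w1) then Phi (v, w1 @ w2) else 0)"
proof (induction w1 arbitrary: v)
  case Nil
  show ?case
  proof (cases "u = v")
    case True
    show ?thesis
    proof (rule ext, clarify)
      fix v' w'
      show "pmult t (Phi (v, [])) (Phi (u, w2)) (v', w') =
        (if u = pend t (v, []) then Phi (v, [] @ w2) else 0) (v', w')"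
        using Phi_start[of u w2 v' w'] True by (auto simp: e_left)
    qed
  next
    case False
    show ?thesis
    proof (rule ext, clarify)
      fix v' w'
      show "pmult t (Phi (v, [])) (Phi (u, w2)) (v', w') =
        (if u = pend t (v, []) then Phi (v, [] @ w2) else 0) (v', w')"
        using Phi_start[of u w2 v' w'] False by (auto simp: e_left)
    qed
  qed
next
  case (Cons a w1)
  show ?case
  proof (cases "v = s a")
    case True
    then show ?thesis using Cons by (simp add: Phi_Cons pmult_assoc)
  next
    case False
    then show ?thesis by (simp add: Phi_Cons)
  qed
qed

lemma basis_expand:
  assumes "finite T" "{p. x p \<noteq> 0} \<subseteq> T"
  shows "x = (\<lambda>r. \<Sum>p\<in>T. (K (x p) * pbasis p) r)"
proof (rule ext)
  fix r
  have "(\<Sum>p\<in>T. (K (x p) * pbasis p) r) = (\<Sum>p\<in>T. if p = r then x r else 0)"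
    by (rule sum.cong) (auto simp: pbasis_def)
  also have "\<dots> = x r" using assms by (auto simp: sum.delta')
  finally show "x r = (\<Sum>p\<in>T. (K (x p) * pbasis p) r)" by simp
qed

lemma phi_eq:
  assumes "finite T" "{p. x p \<noteq> 0} \<subseteq> T"
  shows "phi x = (\<lambda>r. \<Sum>q\<in>T. x q * Phi q r)"
proof (rule ext)
  fix r
  show "phi x r = (\<Sum>q\<in>T. x q * Phi q r)"
    unfolding phi_def using assms by (intro sum.mono_neutral_left) auto
qed

lemma phi_zero[simp]: "phi 0 = 0"
  by (simp add: phi_def zero_fun_def)

lemma phi_add:
  assumes "fsupp x" "fsupp y"
  shows "phi (x + y) = phi x + phi y"
proof -
  let ?T = "{p. x p \<noteq> 0} \<union> {p. y p \<noteq> 0}"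
  have T: "finite ?T" using assms by (simp add: fsupp_def)
  have 1: "phi (x + y) = (\<lambda>r. \<Sum>q\<in>?T. (x + y) q * Phi q r)" by (rule phi_eq[OF T]) auto
  have 2: "phi x = (\<lambda>r. \<Sum>q\<in>?T. x q * Phi q r)" by (rule phi_eq[OF T]) auto
  have 3: "phi y = (\<lambda>r. \<Sum>q\<in>?T. y q * Phi q r)" by (rule phi_eq[OF T]) auto
  show ?thesis unfolding 1 2 3 by (rule ext) (simp add: distrib_right sum.distrib)
qed

lemma phi_K:
  assumes "fsupp x"
  shows "phi (K c * x) = K c * phi x"
proof -
  let ?T = "{p. x p \<noteq> 0}"
  have T: "finite ?T" using assms by (simp add: fsupp_def)
  have 1: "phi (K c * x) = (\<lambda>r. \<Sum>q\<in>?T. (K c * x) q * Phi q r)" by (rule phi_eq[OF T]) auto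
  have 2: "phi x = (\<lambda>r. \<Sum>q\<in>?T. x q * Phi q r)" by (rule phi_eq[OF T]) auto
  show ?thesis unfolding 1 2 by (rule ext) (simp add: sum_distrib_left mult.assoc)
qed

lemma phi_neg:
  assumes "fsupp x"
  shows "phi (- x) = - phi x"
proof -
  have "- x = K (-1) * x" by (rule ext) simp
  moreover have "K (-1) * phi x = - phi x" by (rule ext) simp
  ultimately show ?thesis using phi_K[OF assms, of "-1"] by metis
qed

lemma fsupp_neg: "fsupp x \<Longrightarrow> fsupp (- (x::'b \<Rightarrow> 'k))"
  by (simp add: fsupp_def)

lemma phi_diff:
  assumes "fsupp x" "fsupp y"
  shows "phi (x - y) = phi x - phi y"
  using phi_add[OF assms(1) fsupp_neg[OF assms(2)]] phi_neg[OF assms(2)]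
  by (metis diff_conv_add_uminus)

lemma phi_pbasis: "phi (pbasis p) = Phi p"
proof -
  have "phi (pbasis p) = (\<lambda>r. \<Sum>q\<in>{p}. pbasis p q * Phi q r)"
    by (rule phi_eq) (auto simp: pbasis_def)
  then show ?thesis by (simp add: pbasis_def)
qed

lemma fsupp_img: "fsupp (img a)"
  by (simp add: img_def)

lemma fsupp_Phi: "fsupp (Phi p)"
proof (cases p)
  case (Pair v w)
  show ?thesis unfolding Pair
  proof (induction w arbitrary: v)
    case Nil then show ?case by simp
  next
    case (Cons a w) then show ?case by (simp add: Phi_Cons fsupp_img)
  qed
qed

lemma fsupp_phi: "fsupp x \<Longrightarrow> fsupp (phi x)"
proof -
  assume x: "fsupp x"
  have e: "phi x = (\<lambda>r. \<Sum>q\<in>{q. x q \<noteq> 0}. x q * Phi q r)" by (simp add: phi_def)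
  have "fsupp (\<lambda>r. \<Sum>q\<in>{q. x q \<noteq> 0}. x q * Phi q r)"
    using x by (intro fsupp_sum) (auto simp: fsupp_def[of x] fsupp_Phi)
  then show ?thesis using e by simp
qed

lemma phi_sum:
  assumes "finite T" "\<And>i. i \<in> T \<Longrightarrow> fsupp (g i)"
  shows "phi (\<lambda>r. \<Sum>i\<in>T. g i r) = (\<lambda>r. \<Sum>i\<in>T. phi (g i) r)"
  using assms
proof (induction T rule: finite_induct)
  case empty then show ?case by (simp flip: zero_fun_def)
next
  case (insert a T)
  have e: "(\<lambda>r. \<Sum>i\<in>insert a T. g i r) = g a + (\<lambda>r. \<Sum>i\<in>T. g i r)"
    using insert by (auto simp: fun_eq_iff)
  have "phi (g a + (\<lambda>r. \<Sum>i\<in>T. g i r)) = phi (g a) + phi (\<lambda>r. \<Sum>i\<in>T. g i r)"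
    using insert by (intro phi_add fsupp_sum) auto
  also have "\<dots> = (\<lambda>r. \<Sum>i\<in>insert a T. phi (g i) r)"
    using insert by (auto simp: fun_eq_iff)
  finally show ?case using e by simp
qed

lemma phi_sc:
  assumes "fsupp x"
  shows "phi (\<lambda>r. c * x r) = (\<lambda>r. c * phi x r)"
  using phi_K[OF assms, of c] by (simp add: times_fun_def)

lemma bilin:
  "pmult t (\<lambda>r. \<Sum>p\<in>S. a p * X p r) (\<lambda>r. \<Sum>q\<in>T. b q * Y q r) =
   (\<lambda>r. \<Sum>p\<in>S. \<Sum>q\<in>T. (a p * b q) * pmult t (X p) (Y q) r)"
  by (simp add: pmult_sum_left pmult_sum_right pmult_sc_left pmult_sc_right sum_distrib_left mult.assoc)

lemma phi_pb_mult: "phi (pmult t (pbasis p) (pbasis q)) = pmult t (Phi p) (Phi q)"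
proof -
  obtain v w u w' where pq: "p = (v, w)" "q = (u, w')" by (cases p, cases q) auto
  show ?thesis unfolding pq pb_mult Phi_mult by (simp add: phi_pbasis)
qed

lemma phi_pmult:
  assumes x: "fsupp x" and y: "fsupp y"
  shows "phi (pmult t x y) = pmult t (phi x) (phi y)"
proof -
  let ?Sx = "{p. x p \<noteq> 0}" and ?Sy = "{p. y p \<noteq> 0}"
  have fx: "finite ?Sx" and fy: "finite ?Sy" using x y by (auto simp: fsupp_def)
  have ex: "x = (\<lambda>r. \<Sum>p\<in>?Sx. x p * pbasis p r)"
    using basis_expand[OF fx, of x] by (simp add: times_fun_def)
  have ey: "y = (\<lambda>r. \<Sum>p\<in>?Sy. y p * pbasis p r)"
    using basis_expand[OF fy, of y] by (simp add: times_fun_def)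
  have "pmult t x y = (\<lambda>r. \<Sum>p\<in>?Sx. \<Sum>q\<in>?Sy. (x p * y q) * pmult t (pbasis p) (pbasis q) r)"
    by (subst ex, subst ey, rule bilin)
  then have "phi (pmult t x y) = (\<lambda>r. \<Sum>p\<in>?Sx. phi (\<lambda>r. \<Sum>q\<in>?Sy. (x p * y q) * pmult t (pbasis p) (pbasis q) r) r)"
    using fx fy by (simp add: phi_sum fsupp_sum)
  also have "\<dots> = (\<lambda>r. \<Sum>p\<in>?Sx. \<Sum>q\<in>?Sy. phi (\<lambda>r. (x p * y q) * pmult t (pbasis p) (pbasis q) r) r)"
    using fx fy by (simp add: phi_sum)
  also have "\<dots> = (\<lambda>r. \<Sum>p\<in>?Sx. \<Sum>q\<in>?Sy. (x p * y q) * pmult t (Phi p) (Phi q) r)"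
    by (simp add: phi_sc phi_pb_mult)
  also have "\<dots> = pmult t (\<lambda>r. \<Sum>p\<in>?Sx. x p * Phi p r) (\<lambda>r. \<Sum>q\<in>?Sy. y q * Phi q r)"
    by (rule bilin[symmetric])
  also have "\<dots> = pmult t (phi x) (phi y)" by (simp add: phi_def)
  finally show ?thesis .
qed

lemma phi_unit:
  assumes "finite Q0"
  shows "phi (punit Q0) = punit Q0"
proof -
  have T: "finite ((\<lambda>v. (v, [])) ` Q0)" using assms by simp
  have "phi (punit Q0) = (\<lambda>r. \<Sum>q\<in>(\<lambda>v. (v, [])) ` Q0. punit Q0 q * Phi q r)"
    by (rule phi_eq[OF T]) (auto simp: punit_def split: if_splits)
  also have "\<dots> = (\<lambda>r. \<Sum>v\<in>Q0. pbasis (v, []) r)"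
    by (subst sum.reindex) (auto simp: inj_on_def punit_def)
  also have "\<dots> = punit Q0"
  proof (rule ext, clarify)
    fix u w
    show "(\<Sum>v\<in>Q0. pbasis (v, []) (u, w)) = punit Q0 (u, w)"
    proof (cases "w = []")
      case True
      then show ?thesis using assms by (simp add: pbasis_def punit_def sum.delta' eq_commute[of u])
    next
      case False
      then show ?thesis by (simp add: pbasis_def punit_def)
    qed
  qed
  finally show ?thesis .
qed


lemma img_A:
  assumes "a \<in> Q1" "s a \<in> Q0" "(mu2 a \<noteq> 0 \<or> mu3 a \<noteq> 0) \<longrightarrow> s a = t a"
  shows "img a \<in> path_alg Q0 Q1 s t"
proof (cases "s a = t a")
  case True
  have "valid_path Q0 Q1 s t (s a, replicate 2 a)" "valid_path Q0 Q1 s t (s a, replicate 3 a)"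
    using valid_rep[of a Q1 s Q0 t] assms True by blast+
  then have "valid_path Q0 Q1 s t (s a, [a, a])" "valid_path Q0 Q1 s t (s a, [a, a, a])"
    by (simp_all add: numeral_eq_Suc)
  then show ?thesis unfolding img_def
    by (intro A_add A_K A_pbasis valid_single assms)
next
  case False
  then have "mu2 a = 0" "mu3 a = 0" using assms(3) by auto
  then show ?thesis unfolding img_def using A_pbasis[OF valid_single[of a Q1 s Q0 t]] assms
    by (simp add: K_def zero_fun_def[symmetric])
qed

lemma Phi_A:
  assumes tQ: "\<forall>a\<in>Q1. s a \<in> Q0 \<and> t a \<in> Q0"
    and loops: "\<forall>a\<in>Q1. (mu2 a \<noteq> 0 \<or> mu3 a \<noteq> 0) \<longrightarrow> s a = t a"
    and v: "valid_path Q0 Q1 s t p"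
  shows "Phi p \<in> path_alg Q0 Q1 s t"
proof (cases p)
  case (Pair v w)
  show ?thesis using v unfolding Pair
  proof (induction w arbitrary: v)
    case Nil then show ?case by (simp add: A_pbasis)
  next
    case (Cons a w)
    have a: "a \<in> Q1" "v = s a" using Cons.prems by (auto simp: valid_path_def)
    have "valid_path Q0 Q1 s t (pend t (v, take 1 (a # w)), drop 1 (a # w))"
      using valid_drop[OF Cons.prems] tQ by blast
    then have vw: "valid_path Q0 Q1 s t (t a, w)" by (simp add: pend_def)
    have "img a \<in> path_alg Q0 Q1 s t" using a tQ loops by (intro img_A) auto
    then show ?case using Cons.IH[OF vw] a tQ by (simp add: Phi_Cons A_pmult)
  qed
qed

lemma phi_A:
  assumes tQ: "\<forall>a\<in>Q1. s a \<in> Q0 \<and> t a \<in> Q0"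
    and loops: "\<forall>a\<in>Q1. (mu2 a \<noteq> 0 \<or> mu3 a \<noteq> 0) \<longrightarrow> s a = t a"
    and x: "x \<in> path_alg Q0 Q1 s t"
  shows "phi x \<in> path_alg Q0 Q1 s t"
  unfolding phi_def
proof (rule A_sum)
  show "finite {q. x q \<noteq> 0}" using x by (simp add: A_iff fsupp_def)
  fix q assume "q \<in> {q. x q \<noteq> 0}"
  then have "valid_path Q0 Q1 s t q" using x unfolding A_iff by (cases q) auto
  then show "(\<lambda>r. x q * Phi q r) \<in> path_alg Q0 Q1 s t"
    by (intro A_sc Phi_A tQ loops)
qed

end

lemma funpow_cancel:
  assumes inj: "inj_on g X" and cl: "\<And>x. x \<in> X \<Longrightarrow> g x \<in> X" and a: "a \<in> X"
  shows "(g ^^ (i + k)) a = (g ^^ i) a \<Longrightarrow> (g ^^ k) a = a"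
proof (induction i)
  case 0 then show ?case by simp
next
  case (Suc i)
  have X: "\<And>j. (g ^^ j) a \<in> X"
  proof -
    fix j show "(g ^^ j) a \<in> X" by (induction j) (auto simp: a cl)
  qed
  from Suc.prems have "g ((g ^^ (i + k)) a) = g ((g ^^ i) a)" by simp
  then have "(g ^^ (i + k)) a = (g ^^ i) a" using inj X by (meson inj_onD)
  then show ?case by (rule Suc.IH)
qed

lemma funpow_period:
  assumes fin: "finite X" and inj: "inj_on g X" and cl: "\<And>x. x \<in> X \<Longrightarrow> g x \<in> X" and a: "a \<in> X"
  shows "\<exists>k>0. (g ^^ k) a = a"
proof -
  let ?h = "\<lambda>i. (g ^^ i) a"
  have X: "\<And>j. (g ^^ j) a \<in> X"
  proof -
    fix j show "(g ^^ j) a \<in> X" by (induction j) (auto simp: a cl)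
  qed
  have "\<not> inj_on ?h {0..card X}"
  proof
    assume "inj_on ?h {0..card X}"
    then have "card (?h ` {0..card X}) = card X + 1" by (simp add: card_image)
    moreover have "card (?h ` {0..card X}) \<le> card X" using X fin by (intro card_mono) auto
    ultimately show False by simp
  qed
  then obtain i j where ij: "i \<noteq> j" "?h i = ?h j" unfolding inj_on_def by blast
  show ?thesis
  proof (cases "i < j")
    case True
    then have "(g ^^ (i + (j - i))) a = (g ^^ i) a" using ij by simp
    from funpow_cancel[OF inj cl a this] show ?thesis using True by (intro exI[of _ "j - i"]) auto
  next
    case False
    then have "(g ^^ (j + (i - j))) a = (g ^^ j) a" using ij by simp
    from funpow_cancel[OF inj cl a this] show ?thesis using False ij by (intro exI[of _ "i - j"]) auto
  qed
qed

locale tq_setting =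
  fixes Q0 :: "'v set" and Q1 :: "'a set" and s t :: "'a \<Rightarrow> 'v" and f :: "'a \<Rightarrow> 'a"
  assumes tq: "triangulation_quiver Q0 Q1 s t f"
begin

lemma fin0: "finite Q0" and fin1: "finite Q1" and st: "\<And>a. a \<in> Q1 \<Longrightarrow> s a \<in> Q0 \<and> t a \<in> Q0"
  and card_out: "\<And>i. i \<in> Q0 \<Longrightarrow> card {a\<in>Q1. s a = i} = 2"
  and card_in: "\<And>i. i \<in> Q0 \<Longrightarrow> card {a\<in>Q1. t a = i} = 2"
  and conn: "\<And>i j. i \<in> Q0 \<Longrightarrow> j \<in> Q0 \<Longrightarrow> (i, j) \<in> ({(s a, t a) |a. a \<in> Q1} \<union> {(t a, s a) |a. a \<in> Q1})\<^sup>*"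
  and fbij: "bij_betw f Q1 Q1"
  and fst': "\<And>a. a \<in> Q1 \<Longrightarrow> s (f a) = t a" and f3: "\<And>a. a \<in> Q1 \<Longrightarrow> f (f (f a)) = a"
  using tq unfolding triangulation_quiver_def by auto

lemma f_in: "a \<in> Q1 \<Longrightarrow> f a \<in> Q1" using fbij by (auto simp: bij_betw_def)

lemma f_inj: "a \<in> Q1 \<Longrightarrow> b \<in> Q1 \<Longrightarrow> f a = f b \<Longrightarrow> a = b"
  using fbij by (auto simp: bij_betw_def dest: inj_onD)

lemma out_pair: assumes "a \<in> Q1" shows "\<exists>b. {x\<in>Q1. s x = s a} = {a, b} \<and> b \<noteq> a"
proof -
  have "card {x\<in>Q1. s x = s a} = 2" using card_out st assms by blast
  then obtain x y where xy: "{x\<in>Q1. s x = s a} = {x, y}" "x \<noteq> y" by (auto simp: card_2_iff)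
  then have "a \<in> {x, y}" using assms by blast
  then show ?thesis using xy by (auto simp: insert_commute)
qed

lemma bar_props: assumes "a \<in> Q1"
  shows "bar Q1 s a \<in> Q1" "s (bar Q1 s a) = s a" "bar Q1 s a \<noteq> a"
    "\<And>x. x \<in> Q1 \<Longrightarrow> s x = s a \<Longrightarrow> x = a \<or> x = bar Q1 s a"
proof -
  obtain b where b: "{x\<in>Q1. s x = s a} = {a, b}" "b \<noteq> a" using out_pair[OF assms] by blast
  have "b \<in> Q1" "s b = s a" using b by blast+
  have "bar Q1 s a = b" unfolding bar_def
  proof (rule the_equality)
    show "b \<in> Q1 \<and> s b = s a \<and> b \<noteq> a" using b by blast
    fix x assume "x \<in> Q1 \<and> s x = s a \<and> x \<noteq> a" then show "x = b" using b by blast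
  qed
  then show "bar Q1 s a \<in> Q1" "s (bar Q1 s a) = s a" "bar Q1 s a \<noteq> a"
    "\<And>x. x \<in> Q1 \<Longrightarrow> s x = s a \<Longrightarrow> x = a \<or> x = bar Q1 s a" using b by blast+
qed

lemma bar_bar: "a \<in> Q1 \<Longrightarrow> bar Q1 s (bar Q1 s a) = a"
  using bar_props[of a] bar_props[of "bar Q1 s a"] by metis

lemma bar_inj: "a \<in> Q1 \<Longrightarrow> b \<in> Q1 \<Longrightarrow> bar Q1 s a = bar Q1 s b \<Longrightarrow> a = b"
  using bar_bar by metis

abbreviation g where "g \<equiv> gperm Q1 s f"

lemma g_def': "g a = bar Q1 s (f a)" by (simp add: gperm_def)

lemma g_in: "a \<in> Q1 \<Longrightarrow> g a \<in> Q1" by (simp add: g_def' bar_props f_in)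

lemma s_g: "a \<in> Q1 \<Longrightarrow> s (g a) = t a" by (simp add: g_def' bar_props f_in fst')

lemma g_inj: "a \<in> Q1 \<Longrightarrow> b \<in> Q1 \<Longrightarrow> g a = g b \<Longrightarrow> a = b"
  by (simp add: g_def') (meson bar_inj f_in f_inj)

lemma gpow_in: "a \<in> Q1 \<Longrightarrow> (g ^^ k) a \<in> Q1"
  by (induction k) (auto simp: g_in)

lemma orb: assumes "a \<in> Q1"
  shows "0 < orbsize Q1 s f a" "(g ^^ orbsize Q1 s f a) a = a"
proof -
  have ex: "\<exists>k>0. (g ^^ k) a = a"
    by (rule funpow_period[OF fin1 _ _ assms]) (auto simp: inj_on_def g_inj g_in)
  show "0 < orbsize Q1 s f a" "(g ^^ orbsize Q1 s f a) a = a"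
    using LeastI_ex[of "\<lambda>k. 0 < k \<and> (g ^^ k) a = a"] ex unfolding orbsize_def by auto
qed

lemma gpow_mult_period: assumes "a \<in> Q1" shows "(g ^^ (j * orbsize Q1 s f a)) a = a"
proof (induction j)
  case 0 then show ?case by simp
next
  case (Suc j)
  have "(g ^^ (Suc j * orbsize Q1 s f a)) a = (g ^^ orbsize Q1 s f a) ((g ^^ (j * orbsize Q1 s f a)) a)"
    by (simp add: funpow_add)
  then show ?case using orb[OF assms] Suc by simp
qed

lemma concat_rep_cycle: assumes "a \<in> Q1"
  shows "concat (replicate j (gcycle Q1 s f a)) = map (\<lambda>k. (g ^^ k) a) [0..<j * orbsize Q1 s f a]"
proof (induction j)
  case 0 then show ?case by simp
next
  case (Suc j)
  let ?n = "orbsize Q1 s f a"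
  have "concat (replicate (Suc j) (gcycle Q1 s f a)) = concat (replicate j (gcycle Q1 s f a)) @ gcycle Q1 s f a"
    by (simp add: replicate_append_same[symmetric])
  also have "\<dots> = map (\<lambda>k. (g ^^ k) a) [0..<j * ?n] @ map (\<lambda>k. (g ^^ k) a) [0..<?n]"
    using Suc by (simp add: gcycle_def)
  also have "map (\<lambda>k. (g ^^ k) a) [0..<?n] = map (\<lambda>k. (g ^^ k) a) [j * ?n..<j * ?n + ?n]"
  proof -
    have "map (\<lambda>k. (g ^^ k) a) [j * ?n..<j * ?n + ?n] = map (\<lambda>k. (g ^^ (j * ?n + k)) a) [0..<?n]"
      by (simp add: map_add_upt[symmetric] add.commute)
    also have "\<dots> = map (\<lambda>k. (g ^^ k) a) [0..<?n]"
      using gpow_mult_period[OF assms, of j]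
      by (simp add: funpow_add add.commute[of "j * ?n"])
    finally show ?thesis by simp
  qed
  also have "map (\<lambda>k. (g ^^ k) a) [0..<j * ?n] @ map (\<lambda>k. (g ^^ k) a) [j * ?n..<j * ?n + ?n]
      = map (\<lambda>k. (g ^^ k) a) [0..<Suc j * ?n]"
  proof -
    have "[0..<Suc j * ?n] = [0..<j * ?n] @ [j * ?n..<j * ?n + ?n]"
      using upt_add_eq_append[of 0 "j*?n" ?n] by (simp add: add.commute)
    then show ?thesis by simp
  qed
  finally show ?case .
qed

lemma gpow_shift: assumes "a \<in> Q1" shows "(g ^^ (j * orbsize Q1 s f a + k)) a = (g ^^ k) a"
  using gpow_mult_period[OF assms, of j] by (simp add: funpow_add add.commute[of _ k])

lemma Bpath_map: assumes "a \<in> Q1"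
  shows "Bpath Q1 s f m a = map (\<lambda>k. (g ^^ k) a) [0..<m a * orbsize Q1 s f a]"
  by (simp add: Bpath_def concat_rep_cycle[OF assms])

lemma Apath_map: assumes "a \<in> Q1" "0 < m a"
  shows "Apath Q1 s f m a = map (\<lambda>k. (g ^^ k) a) [0..<m a * orbsize Q1 s f a - 1]"
proof -
  let ?n = "orbsize Q1 s f a" and ?h = "\<lambda>k. (g ^^ k) a"
  have n: "0 < ?n" using orb[OF assms(1)] by simp
  have "take (?n - 1) (gcycle Q1 s f a) = map ?h [0..<?n - 1]"
    by (simp add: gcycle_def take_map)
  also have "\<dots> = map (\<lambda>k. ?h ((m a - 1) * ?n + k)) [0..<?n - 1]"
    by (simp add: gpow_shift[OF assms(1)])
  also have "\<dots> = map ?h [(m a - 1) * ?n..<(m a - 1) * ?n + (?n - 1)]"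
    by (simp add: map_add_upt[symmetric] add.commute)
  finally have 1: "take (?n - 1) (gcycle Q1 s f a) = map ?h [(m a - 1) * ?n..<(m a - 1) * ?n + (?n - 1)]" .
  have 2: "(m a - 1) * ?n + (?n - 1) = m a * ?n - 1" using n assms(2)
    by (cases "m a") (auto simp: algebra_simps)
  have "Apath Q1 s f m a = map ?h [0..<(m a - 1) * ?n] @ map ?h [(m a - 1) * ?n..<(m a - 1) * ?n + (?n - 1)]"
    unfolding Apath_def concat_rep_cycle[OF assms(1)] 1 by simp
  also have "\<dots> = map ?h [0..<(m a - 1) * ?n + (?n - 1)]"
    using upt_add_eq_append[of 0 "(m a - 1) * ?n" "?n - 1"] by simp
  finally show ?thesis using 2 by simp
qed

lemma gchain_valid: assumes "a \<in> Q1" "0 < L"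
  shows "valid_path Q0 Q1 s t (s a, map (\<lambda>k. (g ^^ k) a) [0..<L])"
  unfolding valid_path_def using assms
  by (auto simp: st gpow_in hd_map s_g)


lemma gpow_pred: "0 < k \<Longrightarrow> g ((g ^^ (k - 1)) x) = (g ^^ k) x"
  by (cases k) auto

lemma bl_basic: assumes "border_loop Q1 s t f a"
  shows "a \<in> Q1" "s a = t a" "f a = a" "g a = bar Q1 s a" "bar Q1 s a \<in> Q1"
  using assms bar_props[of a] by (auto simp: border_loop_def g_def')

lemma bar_not_bl:
  assumes bl: "border_loop Q1 s t f a" and two: "2 \<le> card Q0"
  shows "\<not> border_loop Q1 s t f (bar Q1 s a)"
proof
  assume bl2: "border_loop Q1 s t f (bar Q1 s a)"
  let ?b = "bar Q1 s a" and ?i = "s a"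
  have a: "a \<in> Q1" "s a = t a" using bl_basic[OF bl] by auto
  have b: "?b \<in> Q1" "s ?b = ?i" "t ?b = ?i" "?b \<noteq> a" using bar_props[OF a(1)] bl2
    by (auto simp: border_loop_def)
  have i: "?i \<in> Q0" using st a by blast
  have out: "\<And>x. x \<in> Q1 \<Longrightarrow> s x = ?i \<Longrightarrow> t x = ?i"
  proof -
    fix x assume x: "x \<in> Q1" "s x = ?i"
    then have "x = a \<or> x = ?b" using bar_props(4)[OF a(1)] by blast
    then show "t x = ?i" using a b by auto
  qed
  have inc: "\<And>x. x \<in> Q1 \<Longrightarrow> t x = ?i \<Longrightarrow> s x = ?i"
  proof -
    fix x assume x: "x \<in> Q1" "t x = ?i"
    have "card {y\<in>Q1. t y = ?i} = 2" using card_in i by blast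
    moreover have "{a, ?b} \<subseteq> {y\<in>Q1. t y = ?i}" using a b by auto
    moreover have "card {a, ?b} = 2" using b by simp
    moreover have "finite {y\<in>Q1. t y = ?i}" using fin1 by simp
    ultimately have "{y\<in>Q1. t y = ?i} = {a, ?b}" using card_subset_eq[of "{y\<in>Q1. t y = ?i}" "{a, ?b}"] by simp
    then have "x = a \<or> x = ?b" using x by blast
    then show "s x = ?i" using a b by auto
  qed
  have reach: "(?i, j) \<in> ({(s a, t a) |a. a \<in> Q1} \<union> {(t a, s a) |a. a \<in> Q1})\<^sup>* \<Longrightarrow> j = ?i" for j
  proof (induction rule: rtrancl_induct)
    case base then show ?case by simp
  next
    case (step y z)
    then have y: "y = ?i" by simp
    from step(2) obtain x where "x \<in> Q1" "(y, z) = (s x, t x) \<or> (y, z) = (t x, s x)" by blast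
    then show ?case using out[of x] inc[of x] y by auto
  qed
  have "Q0 \<subseteq> {?i}" using reach conn i by blast
  then have "card Q0 \<le> card {?i}" by (intro card_mono) auto
  then show False using two by simp
qed

end

locale main_setting = tq_setting Q0 Q1 s t f
  for Q0 :: "'v set" and Q1 :: "'a set" and s t :: "'a \<Rightarrow> 'v" and f :: "'a \<Rightarrow> 'a" +
  fixes m :: "'a \<Rightarrow> nat" and c :: "'a \<Rightarrow> 'k::field" and b :: "'v \<Rightarrow> 'k"
  assumes two: "(2::'k) \<noteq> 0"
    and three: "card Q0 \<ge> 3"
    and wm: "weight_function Q1 s f m"
    and pc: "parameter_function Q1 s f c"
    and mn: "\<forall>a\<in>Q1. m a * orbsize Q1 s f a \<ge> 3"
begin

lemma m_pos: "a \<in> Q1 \<Longrightarrow> 0 < m a" using wm by (simp add: weight_function_def)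
lemma c_nz: "a \<in> Q1 \<Longrightarrow> c a \<noteq> 0" using pc by (simp add: parameter_function_def)

abbreviation L where "L a \<equiv> m a * orbsize Q1 s f a"

lemma A_map: "a \<in> Q1 \<Longrightarrow> Apath Q1 s f m a = map (\<lambda>k. (g ^^ k) a) [0..<L a - 1]"
  by (rule Apath_map[OF _ m_pos])

lemma B_map: "a \<in> Q1 \<Longrightarrow> Bpath Q1 s f m a = map (\<lambda>k. (g ^^ k) a) [0..<L a]"
  by (rule Bpath_map)

lemma L3: "a \<in> Q1 \<Longrightarrow> 3 \<le> L a" using mn by blast

lemma A_valid: "a \<in> Q1 \<Longrightarrow> valid_path Q0 Q1 s t (s a, Apath Q1 s f m a)"
proof -
  assume a: "a \<in> Q1"
  have "0 < L a - 1" using L3[OF a] by linarith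
  then show ?thesis unfolding A_map[OF a] by (rule gchain_valid[OF a])
qed

lemma B_valid: "a \<in> Q1 \<Longrightarrow> valid_path Q0 Q1 s t (s a, Bpath Q1 s f m a)"
proof -
  assume a: "a \<in> Q1"
  have "0 < L a" using L3[OF a] by linarith
  then show ?thesis unfolding B_map[OF a] by (rule gchain_valid[OF a])
qed

lemma A_chain: "a \<in> Q1 \<Longrightarrow> Suc j < length (Apath Q1 s f m a) \<Longrightarrow>
    Apath Q1 s f m a ! Suc j = g (Apath Q1 s f m a ! j)"
  by (simp add: A_map)

lemma B_chain: "a \<in> Q1 \<Longrightarrow> Suc j < length (Bpath Q1 s f m a) \<Longrightarrow>
    Bpath Q1 s f m a ! Suc j = g (Bpath Q1 s f m a ! j)"
  by (simp add: B_map)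

lemma A_cons: "a \<in> Q1 \<Longrightarrow> \<exists>r. Apath Q1 s f m a = a # r"
proof -
  assume a: "a \<in> Q1"
  have "0 < L a - 1" using mn a by auto
  then have "[0..<L a - 1] = 0 # [1..<L a - 1]" by (simp add: upt_rec)
  then show ?thesis by (simp add: A_map[OF a])
qed

lemma A_len: "a \<in> Q1 \<Longrightarrow> length (Apath Q1 s f m a) = L a - 1"
  by (simp add: A_map)

lemma last_A: "a \<in> Q1 \<Longrightarrow> last (Apath Q1 s f m a) = (g ^^ (L a - 2)) a"
proof -
  assume a: "a \<in> Q1"
  have N: "0 < L a - 1" using L3[OF a] by linarith
  have "last (map (\<lambda>k. (g ^^ k) a) [0..<L a - 1]) = (g ^^ (L a - 1 - 1)) a"
    using N by (simp add: last_map)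
  moreover have "L a - 1 - 1 = L a - 2" by simp
  ultimately show ?thesis by (simp add: A_map[OF a])
qed

lemma gL: "a \<in> Q1 \<Longrightarrow> (g ^^ L a) a = a"
  using gpow_mult_period[of a "m a"] by simp

lemma bl_last: assumes bl: "border_loop Q1 s t f al"
  shows "(g ^^ (L (bar Q1 s al) - 1)) (bar Q1 s al) = al"
    "Bpath Q1 s f m (bar Q1 s al) = Apath Q1 s f m (bar Q1 s al) @ [al]"
    "\<not> border_loop Q1 s t f (last (Apath Q1 s f m (bar Q1 s al)))"
proof -
  let ?b = "bar Q1 s al"
  have al: "al \<in> Q1" "g al = ?b" "?b \<in> Q1" using bl_basic[OF bl] by auto
  have L3: "3 \<le> L ?b" using mn al by auto
  have "g ((g ^^ (L ?b - 1)) ?b) = (g ^^ L ?b) ?b"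
    by (rule gpow_pred) (use L3 in linarith)
  also have "\<dots> = ?b" using gL al by blast
  finally have "g ((g ^^ (L ?b - 1)) ?b) = g al" using al by simp
  then show 1: "(g ^^ (L ?b - 1)) ?b = al" using g_inj gpow_in al by blast
  have "[0..<L ?b] = [0..<L ?b - 1] @ [L ?b - 1]"
  proof -
    obtain k where "L ?b = Suc k" using L3 by (cases "L ?b") auto
    then show ?thesis by simp
  qed
  then show "Bpath Q1 s f m ?b = Apath Q1 s f m ?b @ [al]"
    using 1 al by (simp add: A_map B_map)
  show "\<not> border_loop Q1 s t f (last (Apath Q1 s f m ?b))"
  proof
    assume bl2: "border_loop Q1 s t f (last (Apath Q1 s f m ?b))"
    let ?d = "last (Apath Q1 s f m ?b)"
    have "g ?d = (g ^^ (L ?b - 1)) ?b"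
    proof -
      have "?d = (g ^^ (L ?b - 2)) ?b" using last_A al by blast
      moreover have "L ?b - 2 = L ?b - 1 - 1" by simp
      moreover have "g ((g ^^ (L ?b - 1 - 1)) ?b) = (g ^^ (L ?b - 1)) ?b"
        by (rule gpow_pred) (use L3 in linarith)
      ultimately show ?thesis by simp
    qed
    then have "bar Q1 s ?d = al" using 1 bl_basic[OF bl2] by simp
    then have "?d = ?b" using bar_bar bl_basic[OF bl2] by metis
    then show False using bar_not_bl[OF bl] three bl2 by simp
  qed
qed

lemma nonbl_last: assumes a: "a \<in> Q1"
    and bl: "border_loop Q1 s t f (last (Apath Q1 s f m (bar Q1 s a)))"
  shows "g (f a) = last (Apath Q1 s f m (bar Q1 s a))"
proof -
  let ?b = "bar Q1 s a" let ?d = "last (Apath Q1 s f m ?b)"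
  have b: "?b \<in> Q1" using bar_props a by blast
  have L3: "3 \<le> L ?b" using mn b by auto
  have "g (g ?d) = (g ^^ L ?b) ?b"
  proof -
    have "?d = (g ^^ (L ?b - 2)) ?b" using last_A b by blast
    moreover have "L ?b - 2 = L ?b - 1 - 1" by simp
    moreover have "g ((g ^^ (L ?b - 1 - 1)) ?b) = (g ^^ (L ?b - 1)) ?b"
      by (rule gpow_pred) (use L3 in linarith)
    moreover have "g ((g ^^ (L ?b - 1)) ?b) = (g ^^ L ?b) ?b"
      by (rule gpow_pred) (use L3 in linarith)
    ultimately show ?thesis by simp
  qed
  also have "\<dots> = ?b" using gL b by blast
  finally have "g (bar Q1 s ?d) = ?b" using bl_basic[OF bl] by simp
  then have "bar Q1 s (f (bar Q1 s ?d)) = bar Q1 s a" by (simp add: g_def')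
  then have fd: "f (bar Q1 s ?d) = a" using bar_inj a f_in bl_basic[OF bl] by metis
  have "g (f a) = bar Q1 s (f (f (f (bar Q1 s ?d))))" using fd by (simp add: g_def')
  also have "\<dots> = ?d" using f3 bl_basic[OF bl] bar_bar by simp
  finally show ?thesis .
qed

end

lemma pend_append: "pend t (v, w1 @ w2) = pend t (pend t (v, w1), w2)"
  by (cases "w2 = []") (auto simp: pend_def)

lemma pb_app: "pbasis (v, w1 @ w2) = pmult t (pbasis (v, w1)) (pbasis (pend t (v, w1), w2))"
  by (simp add: pb_mult)

lemma mem_from_diff: "x - y \<in> ideal_gen A mul S \<Longrightarrow> y \<in> ideal_gen A mul S \<Longrightarrow> x \<in> ideal_gen A mul S"
  using id_add[of "x - y" A mul S y] by simp

lemma mem_from_diff': "x - y \<in> ideal_gen A mul S \<Longrightarrow> x \<in> ideal_gen A mul S \<Longrightarrow> y \<in> ideal_gen A mul S"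
  using id_diff[of x A mul S "x - y"] by simp

lemma id_K_inv: "K c * (x::'b \<Rightarrow> 'k::field) \<in> ideal_gen A mul S \<Longrightarrow> c \<noteq> 0 \<Longrightarrow> x \<in> ideal_gen A mul S"
proof -
  assume h: "K c * x \<in> ideal_gen A mul S" "c \<noteq> 0"
  from h(1) have "K (inverse c) * (K c * x) \<in> ideal_gen A mul S" by (rule id_K)
  moreover have "K (inverse c) * (K c * x) = x" using h(2) by (intro ext) simp
  ultimately show ?thesis by simp
qed

lemma K_mult: "K a * (K b * x) = K (a * b) * (x::'b \<Rightarrow> 'k::field)" by (rule ext) simp
lemma K_add: "K a * x + K b * x = K (a + b) * (x::'b \<Rightarrow> 'k::field)" by (rule ext) (simp add: algebra_simps)
lemma K_zero[simp]: "K 0 * x = (0::'b \<Rightarrow> 'k::field)" by (rule ext) simp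
lemma K_one[simp]: "K 1 * x = (x::'b \<Rightarrow> 'k::field)" by (rule ext) simp
lemma K_distrib: "K a * (x + y) = K a * x + K a * (y::'b \<Rightarrow> 'k::field)" by (rule ext) (simp add: algebra_simps)
lemma K_distrib_diff: "K a * (x - y) = K a * x - K a * (y::'b \<Rightarrow> 'k::field)" by (rule ext) (simp add: algebra_simps)

context tq_setting
begin

abbreviation AA where "AA \<equiv> path_alg Q0 Q1 s t"

lemma tQ: "\<forall>a\<in>Q1. t a \<in> Q0" using st by blast

lemma valid_split:
  assumes "valid_path Q0 Q1 s t (v, w1 @ w2)"
  shows "valid_path Q0 Q1 s t (v, w1)" "valid_path Q0 Q1 s t (pend t (v, w1), w2)"
proof -
  show "valid_path Q0 Q1 s t (v, w1)" using valid_take[OF assms, of "length w1"] by simp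
  show "valid_path Q0 Q1 s t (pend t (v, w1), w2)" using valid_drop[OF assms tQ, of "length w1"] by simp
qed

lemma sandwich:
  assumes S: "zero_rels Q1 s f \<subseteq> S"
    and v: "valid_path Q0 Q1 s t (v, w1 @ w2 @ w3)"
    and z: "pbasis (pend t (v, w1), w2) \<in> ideal_gen AA (pmult t) S"
  shows "pbasis (v, w1 @ w2 @ w3) \<in> ideal_gen AA (pmult t) S"
proof -
  let ?v' = "pend t (v, w1)"
  have v1: "valid_path Q0 Q1 s t (v, w1)" and v2: "valid_path Q0 Q1 s t (?v', w2 @ w3)"
    using valid_split[OF v] by auto
  have v3: "valid_path Q0 Q1 s t (pend t (?v', w2), w3)" using valid_split[OF v2] by auto
  have "pbasis (?v', w2 @ w3) = pmult t (pbasis (?v', w2)) (pbasis (pend t (?v', w2), w3))" by (rule pb_app)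
  also have "\<dots> \<in> ideal_gen AA (pmult t) S" by (rule ideal_gen.rmult[OF A_pbasis[OF v3] z])
  finally have "pbasis (?v', w2 @ w3) \<in> ideal_gen AA (pmult t) S" .
  then have "pmult t (pbasis (v, w1)) (pbasis (?v', w2 @ w3)) \<in> ideal_gen AA (pmult t) S"
    by (rule ideal_gen.lmult[OF A_pbasis[OF v1]])
  then show ?thesis by (metis pb_app)
qed

lemma zero_mem:
  assumes S: "zero_rels Q1 s f \<subseteq> S" and a: "a \<in> Q1"
  shows "pbasis (s a, [a, f a, g (f a)]) \<in> ideal_gen AA (pmult t) S"
  using S a by (auto simp: zero_rels_def intro!: ideal_gen.base)

lemma zero_valid: "a \<in> Q1 \<Longrightarrow> valid_path Q0 Q1 s t (s a, [a, f a, g (f a)])"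
  by (auto simp: valid_path_def st f_in g_in fst' s_g nth_Cons split: nat.splits)

end

locale pl = tq_setting Q0 Q1 s t f
  for Q0 :: "'v set" and Q1 :: "'a set" and s t :: "'a \<Rightarrow> 'v" and f :: "'a \<Rightarrow> 'a" +
  fixes mu2 mu3 :: "'a \<Rightarrow> 'k::field"
  assumes mu_zero: "\<And>a. \<not> border_loop Q1 s t f a \<Longrightarrow> mu2 a = 0 \<and> mu3 a = 0"
begin

sublocale phimap s t mu2 mu3 .

lemma loops: "\<forall>a\<in>Q1. (mu2 a \<noteq> 0 \<or> mu3 a \<noteq> 0) \<longrightarrow> s a = t a"
  using mu_zero by (auto simp: border_loop_def)

lemma img_nonbl: "\<not> border_loop Q1 s t f a \<Longrightarrow> img a = pbasis (s a, [a])"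
  using mu_zero[of a] by (simp add: img_def)

lemma img_AA: "a \<in> Q1 \<Longrightarrow> img a \<in> AA"
  using loops st by (intro img_A) auto

lemma Phi_AA: "valid_path Q0 Q1 s t p \<Longrightarrow> Phi p \<in> AA"
  using loops st by (intro Phi_A) auto

lemma phi_AA: "x \<in> AA \<Longrightarrow> phi x \<in> AA"
  using loops st by (intro phi_A) auto

lemma img_e: "pmult t (img a) (pbasis (t a, [])) = img a"
proof -
  have "\<And>p. img a p \<noteq> 0 \<Longrightarrow> pend t p = t a"
    by (auto simp: img_def pbasis_def pend_def split: if_splits)
  then show ?thesis by (auto simp: e_right fun_eq_iff)
qed

lemma Phi_single: "Phi (s a, [a]) = img a"
  by (simp add: Phi_Cons img_e)

lemma Phi_nonbl:
  assumes "valid_path Q0 Q1 s t (v, w)" "\<forall>a\<in>set w. \<not> border_loop Q1 s t f a"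
  shows "Phi (v, w) = pbasis (v, w)"
  using assms
proof (induction w arbitrary: v)
  case Nil then show ?case by simp
next
  case (Cons a w)
  have a: "v = s a" "a \<in> Q1" using Cons.prems by (auto simp: valid_path_def)
  have vw: "valid_path Q0 Q1 s t (t a, w)"
    using valid_split(2)[of v "[a]" w] Cons.prems by simp
  have "Phi (v, a # w) = pmult t (pbasis (s a, [a])) (pbasis (t a, w))"
    using Cons a vw by (simp add: Phi_Cons img_nonbl)
  also have "\<dots> = pbasis (v, a # w)" using a by (simp add: pb_mult)
  finally show ?case .
qed

definition P :: "'a \<Rightarrow> nat \<Rightarrow> 'v \<times> 'a list \<Rightarrow> 'k" where
  "P x k = pbasis (s x, replicate k x)"

lemma PP: "border_loop Q1 s t f x \<Longrightarrow> pmult t (P x j) (P x k) = P x (j + k)"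
proof -
  assume bl: "border_loop Q1 s t f x"
  have "pend t (s x, replicate j x) = s x" using bl_basic[OF bl] by (cases j) (auto simp: pend_def)
  then show ?thesis by (simp add: P_def pb_mult replicate_add)
qed

lemma img_P: "img x = P x 1 + K (mu2 x) * P x 2 + K (mu3 x) * P x 3"
  by (simp add: img_def P_def numeral_eq_Suc)

lemma P_valid: "border_loop Q1 s t f x \<Longrightarrow> valid_path Q0 Q1 s t (s x, replicate k x)"
  using bl_basic[of x] st by (intro valid_rep) auto

lemma P_AA: "border_loop Q1 s t f x \<Longrightarrow> P x k \<in> AA"
  by (simp add: P_def A_pbasis P_valid)

lemma Phi_P: "border_loop Q1 s t f x \<Longrightarrow> Phi (s x, replicate (Suc k) x) = pmult t (img x) (Phi (s x, replicate k x))"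
  using bl_basic[of x] by (simp add: Phi_Cons)

definition E :: "'v \<Rightarrow> 'a list \<Rightarrow> 'v \<times> 'a list \<Rightarrow> 'k" where
  "E v w = pbasis (v, w) + K (mu2 (last w)) * pbasis (v, w @ [last w])
      + K (mu3 (last w)) * pbasis (v, w @ [last w, last w])"

definition gchain :: "'a list \<Rightarrow> bool" where
  "gchain w \<longleftrightarrow> (\<forall>j. Suc j < length w \<longrightarrow> w ! Suc j = g (w ! j))"

lemma chain_valid:
  assumes "w \<noteq> []" "set w \<subseteq> Q1" "gchain w"
  shows "valid_path Q0 Q1 s t (s (hd w), w)"
  unfolding valid_path_def fst_conv snd_conv
proof (intro conjI allI impI)
  show "s (hd w) \<in> Q0" using assms st hd_in_set by blast
  show "set w \<subseteq> Q1" by (fact assms(2))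
  show "s (hd w) = s (hd w)" ..
  fix i assume i: "Suc i < length w"
  then have "w ! i \<in> Q1" using assms(2) nth_mem by (metis Suc_lessD subsetD)
  then show "t (w ! i) = s (w ! Suc i)" using assms(3) i by (simp add: gchain_def s_g)
qed

lemma ext_valid:
  assumes v: "valid_path Q0 Q1 s t (v, w)" and ne: "w \<noteq> []" and bl: "border_loop Q1 s t f (last w)"
  shows "valid_path Q0 Q1 s t (v, w @ [last w])" "valid_path Q0 Q1 s t (v, w @ [last w, last w])"
proof -
  let ?d = "last w"
  have p: "pend t (v, w) = s ?d" using ne bl_basic[OF bl] by (simp add: pend_def)
  have "valid_path Q0 Q1 s t (s ?d, replicate 1 ?d)" "valid_path Q0 Q1 s t (s ?d, replicate 2 ?d)"
    using P_valid[OF bl] by blast+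
  then have "valid_path Q0 Q1 s t (pend t (v, w), [?d])" "valid_path Q0 Q1 s t (pend t (v, w), [?d, ?d])"
    using p by (simp_all add: numeral_eq_Suc)
  then show "valid_path Q0 Q1 s t (v, w @ [last w])" "valid_path Q0 Q1 s t (v, w @ [last w, last w])"
    using valid_append[OF v] by blast+
qed

lemma img_minus: "img x - pbasis (s x, [x]) = K (mu2 x) * pbasis (s x, [x, x]) + K (mu3 x) * pbasis (s x, [x, x, x])"
  by (simp add: img_def)

lemma KL:
  assumes S: "zero_rels Q1 s f \<subseteq> S" and bl: "border_loop Q1 s t f x"
    and v: "valid_path Q0 Q1 s t (t x, bar Q1 s x # r)"
  shows "pmult t (img x - pbasis (s x, [x])) (pbasis (t x, bar Q1 s x # r)) \<in> ideal_gen AA (pmult t) S"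
proof -
  have x: "x \<in> Q1" "s x = t x" "f x = x" "g x = bar Q1 s x" using bl_basic[OF bl] by auto
  let ?u = "bar Q1 s x # r"
  have z: "pbasis (s x, [x, x, bar Q1 s x]) \<in> ideal_gen AA (pmult t) S"
    using zero_mem[OF S x(1)] x by simp
  have vxx: "valid_path Q0 Q1 s t (s x, [x, x])" "valid_path Q0 Q1 s t (s x, [x, x, x])"
    using P_valid[OF bl, of 2] P_valid[OF bl, of 3] by (simp_all add: numeral_eq_Suc)
  have v2: "valid_path Q0 Q1 s t (s x, [x, x] @ ?u)"
    using valid_append[OF vxx(1)] v x by simp
  have v3: "valid_path Q0 Q1 s t (s x, [x, x, x] @ ?u)"
    using valid_append[OF vxx(2)] v x by simp
  have m2: "pbasis (s x, [] @ [x, x, bar Q1 s x] @ r) \<in> ideal_gen AA (pmult t) S"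
    by (rule sandwich[OF S]) (use v2 z in simp_all)
  have m3: "pbasis (s x, [x] @ [x, x, bar Q1 s x] @ r) \<in> ideal_gen AA (pmult t) S"
    by (rule sandwich[OF S]) (use v3 z x in simp_all)
  have "pmult t (img x - pbasis (s x, [x])) (pbasis (t x, ?u)) =
      K (mu2 x) * pbasis (s x, [x, x] @ ?u) + K (mu3 x) * pbasis (s x, [x, x, x] @ ?u)"
    by (simp add: img_minus pmult_add_left pmult_K_left pb_mult)
  also have "\<dots> \<in> ideal_gen AA (pmult t) S"
    using m2 m3 by (intro id_add id_K) simp_all
  finally show ?thesis .
qed

lemma E_Cons:
  assumes "w \<noteq> []"
  shows "E (s x) (x # w) = pmult t (pbasis (s x, [x])) (E (t x) w)"
  using assms by (simp add: E_def pmult_add_right pmult_K_right pb_mult)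

lemma PL:
  assumes S: "zero_rels Q1 s f \<subseteq> S"
  shows "w \<noteq> [] \<Longrightarrow> set w \<subseteq> Q1 \<Longrightarrow> gchain w \<Longrightarrow>
    Phi (s (hd w), w) - E (s (hd w)) w \<in> ideal_gen AA (pmult t) S"
proof (induction w)
  case Nil then show ?case by simp
next
  case (Cons x w)
  show ?case
  proof (cases "w = []")
    case True
    have "Phi (s x, [x]) - E (s x) [x] = 0"
      by (simp add: Phi_single E_def img_def)
    then show ?thesis using True ideal_gen.zero by simp
  next
    case False
    have x: "x \<in> Q1" using Cons.prems by simp
    have cw: "gchain w" using Cons.prems(3) unfolding gchain_def
      by (metis Suc_less_eq length_Cons nth_Cons_Suc)
    have hw: "hd w = g x" using Cons.prems(3) False unfolding gchain_def
      by (metis hd_conv_nth length_greater_0_conv nth_Cons_0 nth_Cons_Suc Suc_mono length_Cons)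
    have shw: "s (hd w) = t x" using hw x s_g by simp
    have sw: "set w \<subseteq> Q1" using Cons.prems by simp
    have IH: "Phi (t x, w) - E (t x) w \<in> ideal_gen AA (pmult t) S"
      using Cons.IH[OF False sw cw] unfolding shw .
    have vw: "valid_path Q0 Q1 s t (t x, w)" using chain_valid[OF False _ cw] Cons.prems shw by simp
    have Phi_eq: "Phi (s x, x # w) = pmult t (img x) (Phi (t x, w))" by (simp add: Phi_Cons)
    have E_eq: "E (s x) (x # w) = pmult t (pbasis (s x, [x])) (E (t x) w)" by (rule E_Cons[OF False])
    have d1: "pmult t (img x) (Phi (t x, w) - E (t x) w) \<in> ideal_gen AA (pmult t) S"
      by (rule ideal_gen.lmult[OF img_AA[OF x] IH])
    have d2: "pmult t (img x - pbasis (s x, [x])) (E (t x) w) \<in> ideal_gen AA (pmult t) S"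
    proof (cases "border_loop Q1 s t f x")
      case False
      then show ?thesis by (simp add: img_nonbl id_zero)
    next
      case bl: True
      have w: "w = bar Q1 s x # tl w" using hw bl_basic[OF bl] False by (metis list.collapse)
      have t1: "pmult t (img x - pbasis (s x, [x])) (pbasis (t x, w)) \<in> ideal_gen AA (pmult t) S"
        using KL[OF S bl, of "tl w"] vw w by simp
      show ?thesis
      proof (cases "border_loop Q1 s t f (last w)")
        case False
        then show ?thesis using t1 mu_zero[OF False] by (simp add: E_def)
      next
        case True
        have ve: "valid_path Q0 Q1 s t (t x, w @ [last w])" "valid_path Q0 Q1 s t (t x, w @ [last w, last w])"
          using ext_valid[OF vw False True] by auto
        have t2: "pmult t (img x - pbasis (s x, [x])) (pbasis (t x, w @ [last w])) \<in> ideal_gen AA (pmult t) S"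
          using KL[OF S bl, of "tl w @ [last w]"] ve w by (metis append_Cons)
        have t3: "pmult t (img x - pbasis (s x, [x])) (pbasis (t x, w @ [last w, last w])) \<in> ideal_gen AA (pmult t) S"
          using KL[OF S bl, of "tl w @ [last w, last w]"] ve w by (metis append_Cons)
        show ?thesis using t1 t2 t3
          by (simp add: E_def pmult_add_right pmult_K_right id_add id_K)
      qed
    qed
    have eq: "Phi (s x, x # w) - E (s x) (x # w) =
        pmult t (img x) (Phi (t x, w) - E (t x) w) + pmult t (img x - pbasis (s x, [x])) (E (t x) w)"
      unfolding Phi_eq E_eq by (simp add: pmult_diff_right pmult_diff_left)
    show ?thesis unfolding list.sel(1) eq by (rule id_add[OF d1 d2])
  qed
qed

lemma imgP1: "border_loop Q1 s t f x \<Longrightarrow>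
   pmult t (img x) (P x 1) = P x 2 + K (mu2 x) * P x 3 + K (mu3 x) * P x 4"
  by (simp add: img_P pmult_add_left pmult_K_left PP numeral_eq_Suc)

lemma imgP2: "border_loop Q1 s t f x \<Longrightarrow>
   pmult t (img x) (P x 2) = P x 3 + K (mu2 x) * P x 4 + K (mu3 x) * P x 5"
  by (simp add: img_P pmult_add_left pmult_K_left PP numeral_eq_Suc)

lemma imgP3: "border_loop Q1 s t f x \<Longrightarrow>
   pmult t (img x) (P x 3) = P x 4 + K (mu2 x) * P x 5 + K (mu3 x) * P x 6"
  by (simp add: img_P pmult_add_left pmult_K_left PP numeral_eq_Suc)

lemma Phi_rep1: "border_loop Q1 s t f x \<Longrightarrow> Phi (s x, replicate 1 x) = img x"
  by (simp add: Phi_single)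

lemma Phi_rep2: "border_loop Q1 s t f x \<Longrightarrow> Phi (s x, replicate 2 x) = pmult t (img x) (img x)"
  using Phi_P[of x 1] Phi_rep1[of x] by (simp add: numeral_eq_Suc)

lemma Phi_rep3: "border_loop Q1 s t f x \<Longrightarrow> Phi (s x, replicate 3 x) = pmult t (img x) (pmult t (img x) (img x))"
  using Phi_P[of x 2] Phi_rep2[of x] by (simp add: numeral_eq_Suc)

lemma sq_mod:
  assumes bl: "border_loop Q1 s t f x" and N: "\<And>k. 4 \<le> k \<Longrightarrow> P x k \<in> ideal_gen AA (pmult t) S"
  shows "pmult t (img x) (img x) - (P x 2 + K (mu2 x) * P x 3 + K (mu2 x) * P x 3) \<in> ideal_gen AA (pmult t) S"
proof -
  have e: "pmult t (img x) (img x) = pmult t (img x) (P x 1) + K (mu2 x) * pmult t (img x) (P x 2)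
      + K (mu3 x) * pmult t (img x) (P x 3)"
    by (subst (2) img_P) (simp only: pmult_add_right pmult_K_right)
  have "pmult t (img x) (img x) - (P x 2 + K (mu2 x) * P x 3 + K (mu2 x) * P x 3) =
     K (mu3 x) * P x 4 + K (mu2 x) * (K (mu2 x) * P x 4 + K (mu3 x) * P x 5)
     + K (mu3 x) * (P x 4 + K (mu2 x) * P x 5 + K (mu3 x) * P x 6)"
    unfolding e imgP1[OF bl] imgP2[OF bl] imgP3[OF bl] by (simp add: algebra_simps)
  also have "\<dots> \<in> ideal_gen AA (pmult t) S"
    using N by (intro id_add id_K) auto
  finally show ?thesis .
qed

lemma cube_mod:
  assumes bl: "border_loop Q1 s t f x" and N: "\<And>k. 4 \<le> k \<Longrightarrow> P x k \<in> ideal_gen AA (pmult t) S"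
  shows "pmult t (img x) (pmult t (img x) (img x)) - P x 3 \<in> ideal_gen AA (pmult t) S"
proof -
  let ?Q = "P x 2 + K (mu2 x) * P x 3 + K (mu2 x) * P x 3"
  have d: "pmult t (img x) (pmult t (img x) (img x) - ?Q) \<in> ideal_gen AA (pmult t) S"
    using bl_basic[OF bl] by (intro ideal_gen.lmult img_AA sq_mod[OF bl N]) auto
  have "pmult t (img x) ?Q - P x 3 = K (mu2 x) * P x 4 + K (mu3 x) * P x 5 +
     K (mu2 x) * (P x 4 + K (mu2 x) * P x 5 + K (mu3 x) * P x 6) +
     K (mu2 x) * (P x 4 + K (mu2 x) * P x 5 + K (mu3 x) * P x 6)"
    unfolding pmult_add_right pmult_K_right imgP2[OF bl] imgP3[OF bl] by (simp add: algebra_simps)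
  also have "\<dots> \<in> ideal_gen AA (pmult t) S"
    using N by (intro id_add id_K) auto
  finally have "pmult t (img x) ?Q - P x 3 \<in> ideal_gen AA (pmult t) S" .
  from id_add[OF d this] show ?thesis by (simp add: pmult_diff_right)
qed

end

context main_setting
begin

definition Pp :: "'a \<Rightarrow> nat \<Rightarrow> 'v \<times> 'a list \<Rightarrow> 'k" where
  "Pp x k = pbasis (s x, replicate k x)"

lemma Pp_valid: "border_loop Q1 s t f x \<Longrightarrow> valid_path Q0 Q1 s t (s x, replicate k x)"
  using bl_basic[of x] st by (intro valid_rep) auto

lemma Pp_AA: "border_loop Q1 s t f x \<Longrightarrow> Pp x k \<in> AA"
  by (simp add: Pp_def A_pbasis Pp_valid)

lemma Pp_mult: "border_loop Q1 s t f x \<Longrightarrow> pmult t (Pp x j) (Pp x k) = Pp x (j + k)"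
proof -
  assume bl: "border_loop Q1 s t f x"
  have "pend t (s x, replicate j x) = s x" using bl_basic[OF bl] by (cases j) (auto simp: pend_def)
  then show ?thesis by (simp add: Pp_def pb_mult replicate_add)
qed

lemma pend_rep: "border_loop Q1 s t f x \<Longrightarrow> pend t (s x, replicate j x) = s x"
  using bl_basic[of x] by (cases j) (auto simp: pend_def)

lemma pend_A: assumes bl: "border_loop Q1 s t f al"
  shows "pend t (s al, Apath Q1 s f m (bar Q1 s al)) = s al"
proof -
  let ?b = "bar Q1 s al"
  have b: "?b \<in> Q1" using bl_basic[OF bl] by auto
  have ne: "Apath Q1 s f m ?b \<noteq> []" using A_cons[OF b] by auto
  have "last (Apath Q1 s f m ?b) = (g ^^ (L ?b - 2)) ?b" by (rule last_A[OF b])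
  moreover have "L ?b - 2 = L ?b - 1 - 1" by simp
  moreover have "g ((g ^^ (L ?b - 1 - 1)) ?b) = (g ^^ (L ?b - 1)) ?b"
    by (rule gpow_pred) (use L3[OF b] in linarith)
  ultimately have "g (last (Apath Q1 s f m ?b)) = al" using bl_last(1)[OF bl] by simp
  moreover have "last (Apath Q1 s f m ?b) \<in> Q1" using ne A_valid[OF b] last_in_set[OF ne]
    by (auto simp: valid_path_def)
  ultimately have "t (last (Apath Q1 s f m ?b)) = s al" using s_g by metis
  then show ?thesis using ne by (simp add: pend_def)
qed

lemma valid_A_bl: "border_loop Q1 s t f al \<Longrightarrow> valid_path Q0 Q1 s t (s al, Apath Q1 s f m (bar Q1 s al))"
  using A_valid[of "bar Q1 s al"] bl_basic[of al] bar_props[of al] by auto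

lemma valid_A_rep: assumes bl: "border_loop Q1 s t f al"
  shows "valid_path Q0 Q1 s t (s al, Apath Q1 s f m (bar Q1 s al) @ replicate j al)"
  using valid_append[OF valid_A_bl[OF bl]] pend_A[OF bl] Pp_valid[OF bl] by simp

lemma valid_rep_A: assumes bl: "border_loop Q1 s t f al"
  shows "valid_path Q0 Q1 s t (s al, replicate j al @ Apath Q1 s f m (bar Q1 s al))"
  using valid_append[OF Pp_valid[OF bl]] pend_rep[OF bl] valid_A_bl[OF bl] by simp

lemma lin3: "x - y - (z::'v \<times> 'a list \<Rightarrow> 'k) \<in> ideal_gen AA (pmult t) S \<Longrightarrow> x \<in> ideal_gen AA (pmult t) S \<Longrightarrow>
   z \<in> ideal_gen AA (pmult t) S \<Longrightarrow> y \<in> ideal_gen AA (pmult t) S"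
proof -
  assume h: "x - y - z \<in> ideal_gen AA (pmult t) S" "x \<in> ideal_gen AA (pmult t) S" "z \<in> ideal_gen AA (pmult t) S"
  have m: "x - z - (x - y - z) \<in> ideal_gen AA (pmult t) S" using id_diff[OF id_diff[OF h(2) h(3)] h(1)] .
  have eq: "x - z - (x - y - z) = y" by (simp add: algebra_simps)
  show ?thesis using m unfolding eq .
qed

lemma PA_mem:
  assumes S: "zero_rels Q1 s f \<subseteq> S" and bl: "border_loop Q1 s t f al"
  shows "pmult t (Pp al 2) (pbasis (s al, Apath Q1 s f m (bar Q1 s al) @ replicate j al)) \<in> ideal_gen AA (pmult t) S"
proof -
  let ?be = "bar Q1 s al" let ?v = "s al"
  have al: "al \<in> Q1" "f al = al" "g al = ?be" "?be \<in> Q1" using bl_basic[OF bl] by auto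
  obtain r where r: "Apath Q1 s f m ?be = ?be # r" using A_cons[OF al(4)] by blast
  have e: "pmult t (Pp al 2) (pbasis (?v, Apath Q1 s f m ?be @ replicate j al)) =
     pbasis (?v, [] @ [al, al, ?be] @ (r @ replicate j al))"
    using pend_rep[OF bl, of 2] r by (simp add: Pp_def pb_mult numeral_eq_Suc)
  have v: "valid_path Q0 Q1 s t (?v, replicate 2 al @ (Apath Q1 s f m ?be @ replicate j al))"
    using valid_append[OF Pp_valid[OF bl, of 2]] pend_rep[OF bl, of 2] valid_A_rep[OF bl, of j] by simp
  have z: "pbasis (?v, [al, al, ?be]) \<in> ideal_gen AA (pmult t) S"
    using zero_mem[OF S al(1)] al by simp
  show ?thesis unfolding e
    by (rule sandwich[OF S]) (use v r z in \<open>simp_all add: numeral_eq_Suc\<close>)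
qed

lemma gen_cons:
  assumes S: "zero_rels Q1 s f \<subseteq> S" and bl: "border_loop Q1 s t f al"
    and gen: "Pp al 2 - K (c (bar Q1 s al)) * pbasis (s al, Apath Q1 s f m (bar Q1 s al))
       - K e * pbasis (s al, Bpath Q1 s f m (bar Q1 s al)) \<in> ideal_gen AA (pmult t) S"
  shows "\<And>k. 4 \<le> k \<Longrightarrow> Pp al k \<in> ideal_gen AA (pmult t) S"
    "pbasis (s al, Bpath Q1 s f m (bar Q1 s al) @ [al]) \<in> ideal_gen AA (pmult t) S"
    "Pp al 3 - K (c (bar Q1 s al)) * pbasis (s al, Bpath Q1 s f m (bar Q1 s al)) \<in> ideal_gen AA (pmult t) S"
proof -
  let ?be = "bar Q1 s al" let ?v = "s al" let ?c = "c ?be"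
  let ?Id = "ideal_gen AA (pmult t) S"
  let ?A = "Apath Q1 s f m ?be"
  define Y :: "nat \<Rightarrow> 'v \<times> 'a list \<Rightarrow> 'k" where "Y j = pbasis (?v, ?A @ replicate j al)" for j
  have al: "al \<in> Q1" "f al = al" "g al = ?be" "?be \<in> Q1" "s ?be = s al" using bl_basic[OF bl] bar_props[of al] by auto
  have cnz: "?c \<noteq> 0" using c_nz al by blast
  have B: "Bpath Q1 s f m ?be = ?A @ [al]" by (rule bl_last(2)[OF bl])
  have Y0: "Y 0 = pbasis (?v, ?A)" by (simp add: Y_def)
  have Y1: "Y 1 = pbasis (?v, Bpath Q1 s f m ?be)" by (simp add: Y_def B)
  have YP: "pmult t (Y j) (Pp al k) = Y (j + k)" for j k
    using pend_append[of t ?v ?A "replicate j al"] pend_A[OF bl] pend_rep[OF bl]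
    by (simp add: Y_def Pp_def pb_mult replicate_add)
  have gen': "Pp al 2 - K ?c * Y 0 - K e * Y 1 \<in> ?Id" using gen Y0 Y1 by simp
  have YAA: "Y j \<in> AA" for j by (simp add: Y_def A_pbasis valid_A_rep[OF bl])
  have PYm: "pmult t (Pp al 2) (Y j) \<in> ?Id" for j unfolding Y_def by (rule PA_mem[OF S bl])
  have "pmult t (Pp al 2) (Pp al 2 - K ?c * Y 0 - K e * Y 1) \<in> ?Id"
    by (rule ideal_gen.lmult[OF Pp_AA[OF bl] gen'])
  then have "Pp al 4 - K ?c * pmult t (Pp al 2) (Y 0) - K e * pmult t (Pp al 2) (Y 1) \<in> ?Id"
    by (simp add: pmult_diff_right pmult_K_right Pp_mult[OF bl])
  then have P4: "Pp al 4 \<in> ?Id"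
    using PYm by (metis (no_types, lifting) diff_add_cancel id_add id_K)
  show Pk: "\<And>k. 4 \<le> k \<Longrightarrow> Pp al k \<in> ?Id"
  proof -
    fix k :: nat assume "4 \<le> k"
    then have "Pp al k = pmult t (Pp al 4) (Pp al (k - 4))" by (simp add: Pp_mult[OF bl])
    then show "Pp al k \<in> ?Id" using ideal_gen.rmult[OF Pp_AA[OF bl] P4] by simp
  qed
  have gj: "Pp al (2 + j) - K ?c * Y j - K e * Y (1 + j) \<in> ?Id" for j
  proof -
    have "pmult t (Pp al 2 - K ?c * Y 0 - K e * Y 1) (Pp al j) \<in> ?Id"
      by (rule ideal_gen.rmult[OF Pp_AA[OF bl] gen'])
    then show ?thesis by (simp add: pmult_diff_left pmult_K_left Pp_mult[OF bl] YP)
  qed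
  have Yk: "Y j \<in> ?Id" if "4 \<le> j" for j
  proof -
    have "pmult t (Y 0) (Pp al j) \<in> ?Id" by (rule ideal_gen.lmult[OF YAA Pk[OF that]])
    then show ?thesis by (simp add: YP)
  qed
  have gj3: "Pp al 5 - K ?c * Y 3 - K e * Y 4 \<in> ?Id" using gj[of 3] by (simp add: numeral_eq_Suc)
  have "K ?c * Y 3 \<in> ?Id"
    by (rule lin3[OF gj3 Pk id_K[OF Yk]]) simp_all
  then have Y3: "Y 3 \<in> ?Id" using id_K_inv cnz by blast
  have gj2: "Pp al 4 - K ?c * Y 2 - K e * Y 3 \<in> ?Id" using gj[of 2] by (simp add: numeral_eq_Suc)
  have "K ?c * Y 2 \<in> ?Id"
    by (rule lin3[OF gj2 Pk id_K[OF Y3]]) simp_all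
  then have Y2: "Y 2 \<in> ?Id" using id_K_inv cnz by blast
  show "pbasis (?v, Bpath Q1 s f m ?be @ [al]) \<in> ?Id"
    using Y2 by (simp add: Y_def B numeral_eq_Suc)
  have "Pp al 3 - K ?c * Y 1 - K e * Y 2 \<in> ?Id" using gj[of 1] by (simp add: numeral_eq_Suc)
  then have "Pp al 3 - K ?c * Y 1 \<in> ?Id" using id_add[OF _ id_K[OF Y2], of "Pp al 3 - K ?c * Y 1 - K e * Y 2" e] by simp
  then show "Pp al 3 - K ?c * pbasis (?v, Bpath Q1 s f m ?be) \<in> ?Id" using Y1 by simp
qed

end

locale mpl = main_setting Q0 Q1 s t f m c b + pl Q0 Q1 s t f mu2 mu3
  for Q0 :: "'v set" and Q1 :: "'a set" and s t :: "'a \<Rightarrow> 'v" and f :: "'a \<Rightarrow> 'a"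
    and m :: "'a \<Rightarrow> nat" and c :: "'a \<Rightarrow> 'k::field" and b :: "'v \<Rightarrow> 'k"
    and mu2 mu3 :: "'a \<Rightarrow> 'k"
begin

lemma P_Pp: "P = Pp" by (simp add: fun_eq_iff P_def Pp_def)

lemma f_nonbl: "a \<in> Q1 \<Longrightarrow> \<not> border_loop Q1 s t f a \<Longrightarrow> \<not> border_loop Q1 s t f (f a)"
proof
  assume a: "a \<in> Q1" "\<not> border_loop Q1 s t f a" and bl: "border_loop Q1 s t f (f a)"
  have "f (f a) = f a" using bl by (simp add: border_loop_def)
  then have "f a = a" using f_inj f_in a(1) by blast
  then show False using a bl by simp
qed

lemma A_gchain: "a \<in> Q1 \<Longrightarrow> gchain (Apath Q1 s f m a)"
  using A_chain by (simp add: gchain_def)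

lemma B_gchain: "a \<in> Q1 \<Longrightarrow> gchain (Bpath Q1 s f m a)"
  using B_chain by (simp add: gchain_def)

lemma A_set: "a \<in> Q1 \<Longrightarrow> set (Apath Q1 s f m a) \<subseteq> Q1"
  using A_valid by (simp add: valid_path_def)

lemma B_set: "a \<in> Q1 \<Longrightarrow> set (Bpath Q1 s f m a) \<subseteq> Q1"
  using B_valid by (simp add: valid_path_def)

lemma B_ne: "a \<in> Q1 \<Longrightarrow> Bpath Q1 s f m a \<noteq> []"
proof -
  assume a: "a \<in> Q1"
  have "0 < L a" using L3[OF a] by linarith
  then show ?thesis unfolding B_map[OF a] by simp
qed

lemma hd_A: "a \<in> Q1 \<Longrightarrow> hd (Apath Q1 s f m a) = a" using A_cons by force

lemma hd_B: "a \<in> Q1 \<Longrightarrow> hd (Bpath Q1 s f m a) = a"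
proof -
  assume a: "a \<in> Q1"
  have "0 < L a" using L3[OF a] by linarith
  then have "[0..<L a] = 0 # [1..<L a]" by (simp add: upt_rec)
  then show ?thesis by (simp add: B_map[OF a])
qed

lemma PL_A: assumes S: "zero_rels Q1 s f \<subseteq> S" and a: "a \<in> Q1"
  shows "Phi (s a, Apath Q1 s f m a) - E (s a) (Apath Q1 s f m a) \<in> ideal_gen AA (pmult t) S"
  using PL[OF S, of "Apath Q1 s f m a"] A_cons[OF a] A_set[OF a] A_gchain[OF a] hd_A[OF a] by force

lemma PL_B: assumes S: "zero_rels Q1 s f \<subseteq> S" and a: "a \<in> Q1"
  shows "Phi (s a, Bpath Q1 s f m a) - E (s a) (Bpath Q1 s f m a) \<in> ideal_gen AA (pmult t) S"
  using PL[OF S, of "Bpath Q1 s f m a"] B_ne[OF a] B_set[OF a] B_gchain[OF a] hd_B[OF a] by force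

definition gnb :: "'a \<Rightarrow> 'v \<times> 'a list \<Rightarrow> 'k" where
  "gnb a = pbasis (s a, [a, f a]) - K (c (bar Q1 s a)) * pbasis (s (bar Q1 s a), Apath Q1 s f m (bar Q1 s a))"

lemma valid2: "a \<in> Q1 \<Longrightarrow> valid_path Q0 Q1 s t (s a, [a, f a])"
  using valid_split(1)[of "s a" "[a, f a]" "[g (f a)]"] zero_valid by simp

lemma E_nonbl: "\<not> border_loop Q1 s t f (last w) \<Longrightarrow> E v w = pbasis (v, w)"
  using mu_zero by (simp add: E_def)

lemma NB_ext:
  assumes S: "zero_rels Q1 s f \<subseteq> S" and a: "a \<in> Q1"
    and gen: "gnb a \<in> ideal_gen AA (pmult t) S"
    and bl: "border_loop Q1 s t f (last (Apath Q1 s f m (bar Q1 s a)))"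
  shows "pbasis (s a, Apath Q1 s f m (bar Q1 s a) @ [last (Apath Q1 s f m (bar Q1 s a))]) \<in> ideal_gen AA (pmult t) S"
    "pbasis (s a, Apath Q1 s f m (bar Q1 s a) @ [last (Apath Q1 s f m (bar Q1 s a)), last (Apath Q1 s f m (bar Q1 s a))]) \<in> ideal_gen AA (pmult t) S"
proof -
  let ?be = "bar Q1 s a" let ?A = "Apath Q1 s f m ?be" let ?d = "last ?A" let ?Id = "ideal_gen AA (pmult t) S"
  have be: "?be \<in> Q1" "s ?be = s a" using bar_props a by auto
  have d: "?d \<in> Q1" "s ?d = t ?d" using bl_basic[OF bl] by auto
  have gd: "g (f a) = ?d" by (rule nonbl_last[OF a bl])
  have ne: "?A \<noteq> []" using A_cons[OF be(1)] by auto
  have "s (g (f a)) = t (f a)" using s_g f_in a by blast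
  then have p1: "pend t (s a, [a, f a]) = s ?d" using gd by (simp add: pend_def)
  have p2: "pend t (s a, ?A) = s ?d" using ne d by (simp add: pend_def)
  have vd: "valid_path Q0 Q1 s t (s ?d, [?d])" using d st by (intro valid_single) auto
  have "pmult t (gnb a) (pbasis (s ?d, [?d])) \<in> ?Id"
    by (rule ideal_gen.rmult[OF A_pbasis[OF vd] gen])
  then have m: "pbasis (s a, [a, f a, ?d]) - K (c ?be) * pbasis (s a, ?A @ [?d]) \<in> ?Id"
    using p1 p2 be by (simp add: gnb_def pmult_diff_left pmult_K_left pb_mult)
  have z: "pbasis (s a, [a, f a, ?d]) \<in> ?Id" using zero_mem[OF S a] gd by simp
  have "K (c ?be) * pbasis (s a, ?A @ [?d]) \<in> ?Id"
    using mem_from_diff'[OF m z] .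
  then show 1: "pbasis (s a, ?A @ [?d]) \<in> ?Id" using id_K_inv c_nz be by blast
  have "pend t (s a, ?A @ [?d]) = s ?d" using d by (simp add: pend_def)
  then have eq: "pmult t (pbasis (s a, ?A @ [?d])) (pbasis (s ?d, [?d])) = pbasis (s a, ?A @ [?d, ?d])"
    by (simp add: pb_mult)
  have "pmult t (pbasis (s a, ?A @ [?d])) (pbasis (s ?d, [?d])) \<in> ?Id"
    by (rule ideal_gen.rmult[OF A_pbasis[OF vd] 1])
  then show "pbasis (s a, ?A @ [?d, ?d]) \<in> ?Id" unfolding eq .
qed

lemma phi_gnb:
  assumes S: "zero_rels Q1 s f \<subseteq> S" and a: "a \<in> Q1" and nb: "\<not> border_loop Q1 s t f a"
    and gen: "gnb a \<in> ideal_gen AA (pmult t) S"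
  shows "phi (gnb a) \<in> ideal_gen AA (pmult t) S"
proof -
  let ?be = "bar Q1 s a" let ?A = "Apath Q1 s f m ?be" let ?d = "last ?A" let ?Id = "ideal_gen AA (pmult t) S"
  let ?A' = "pbasis (s a, ?A)"
  have be: "?be \<in> Q1" "s ?be = s a" using bar_props a by auto
  have ph: "phi (gnb a) = Phi (s a, [a, f a]) - K (c ?be) * Phi (s a, ?A)"
    unfolding gnb_def be(2) phi_diff[OF fsupp_pbasis fsupp_K[OF fsupp_pbasis]] phi_K[OF fsupp_pbasis] phi_pbasis ..
  have P2: "Phi (s a, [a, f a]) = pbasis (s a, [a, f a])"
    using Phi_nonbl[OF valid2[OF a]] nb f_nonbl[OF a nb] by simp
  have D: "Phi (s a, ?A) - E (s a) ?A \<in> ?Id" using PL_A[OF S be(1)] be by simp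
  have DE: "E (s a) ?A - ?A' \<in> ?Id"
  proof (cases "border_loop Q1 s t f ?d")
    case False then show ?thesis by (simp add: E_nonbl id_zero)
  next
    case True
    have "E (s a) ?A - ?A' = K (mu2 ?d) * pbasis (s a, ?A @ [?d]) + K (mu3 ?d) * pbasis (s a, ?A @ [?d, ?d])"
      by (simp add: E_def)
    also have "\<dots> \<in> ?Id" using NB_ext[OF S a gen True] by (intro id_add id_K)
    finally show ?thesis .
  qed
  have "phi (gnb a) - gnb a = - (K (c ?be) * ((Phi (s a, ?A) - E (s a) ?A) + (E (s a) ?A - ?A')))"
    unfolding ph P2 unfolding gnb_def be(2) by (simp add: algebra_simps K_distrib K_distrib_diff)
  also have "\<dots> \<in> ?Id" using D DE by (intro id_neg id_K id_add)
  finally show ?thesis using mem_from_diff gen by blast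
qed

lemma two_le: "2 \<le> card Q0" using three by simp

lemma phi_zero_rel:
  assumes S: "zero_rels Q1 s f \<subseteq> S" and be: "be \<in> Q1"
  shows "phi (pbasis (s be, [be, f be, g (f be)])) \<in> ideal_gen AA (pmult t) S"
proof (cases "border_loop Q1 s t f be")
  case True
  let ?Id = "ideal_gen AA (pmult t) S" let ?bb = "bar Q1 s be" let ?v = "s be"
  have b: "be \<in> Q1" "s be = t be" "f be = be" "g be = ?bb" "?bb \<in> Q1" "s ?bb = s be"
    using bl_basic[OF True] bar_props[of be] be by auto
  have nbb: "\<not> border_loop Q1 s t f ?bb" using bar_not_bl[OF True two_le] .
  have vbb: "valid_path Q0 Q1 s t (?v, [?bb])" using b st by (metis valid_single)
  have P1: "Phi (?v, [?bb]) = pbasis (?v, [?bb])" using Phi_nonbl[OF vbb] nbb by simp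
  have X: "Phi (?v, [be, ?bb]) = pmult t (img be) (pbasis (?v, [?bb]))"
    using P1 b by (simp add: Phi_Cons)
  have Phi3: "phi (pbasis (s be, [be, f be, g (f be)])) = pmult t (img be) (Phi (?v, [be, ?bb]))"
    using b by (simp add: phi_pbasis Phi_Cons)
  have k: "pmult t (img be - pbasis (s be, [be])) (pbasis (t be, [?bb])) \<in> ?Id"
    using KL[OF S True, of "[]"] vbb b by simp
  have d1: "Phi (?v, [be, ?bb]) - pbasis (?v, [be, ?bb]) \<in> ?Id"
    using k b unfolding X by (simp add: pmult_diff_left pb_mult)
  have d2: "pmult t (img be) (Phi (?v, [be, ?bb]) - pbasis (?v, [be, ?bb])) \<in> ?Id"
    by (rule ideal_gen.lmult[OF img_AA[OF be] d1])
  have z: "pbasis (?v, [be, be, ?bb]) \<in> ?Id" using zero_mem[OF S be] b by simp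
  have vz: "valid_path Q0 Q1 s t (?v, [be, be, ?bb])" using zero_valid[OF be] b by simp
  have zj: "pbasis (?v, replicate j be @ [be, be, ?bb] @ []) \<in> ?Id" for j
  proof (rule sandwich[OF S])
    show "valid_path Q0 Q1 s t (?v, replicate j be @ [be, be, ?bb] @ [])"
      using valid_append[OF Pp_valid[OF True, of j]] pend_rep[OF True, of j] vz by simp
    show "pbasis (pend t (?v, replicate j be), [be, be, ?bb]) \<in> ?Id" using pend_rep[OF True] z by simp
  qed
  have "pmult t (img be) (pbasis (?v, [be, ?bb])) =
     pbasis (?v, replicate 0 be @ [be, be, ?bb] @ []) + K (mu2 be) * pbasis (?v, replicate 1 be @ [be, be, ?bb] @ [])
     + K (mu3 be) * pbasis (?v, replicate 2 be @ [be, be, ?bb] @ [])"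
    using b by (simp add: img_def pmult_add_left pmult_K_left pb_mult numeral_eq_Suc)
  also have "\<dots> \<in> ?Id" using zj by (intro id_add id_K)
  finally have d3: "pmult t (img be) (pbasis (?v, [be, ?bb])) \<in> ?Id" .
  have "phi (pbasis (s be, [be, f be, g (f be)])) =
      pmult t (img be) (Phi (?v, [be, ?bb]) - pbasis (?v, [be, ?bb])) + pmult t (img be) (pbasis (?v, [be, ?bb]))"
    unfolding Phi3 by (simp add: pmult_diff_right)
  also have "\<dots> \<in> ?Id" using d2 d3 by (rule id_add)
  finally show ?thesis .
next
  case False
  let ?Id = "ideal_gen AA (pmult t) S" let ?v = "s be" let ?d = "g (f be)"
  have fb: "f be \<in> Q1" "s (f be) = t be" "\<not> border_loop Q1 s t f (f be)"
    using f_in fst' f_nonbl[OF be False] be by auto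
  have d: "?d \<in> Q1" "s ?d = t (f be)" using g_in s_g fb by auto
  have "phi (pbasis (?v, [be, f be, ?d])) = pmult t (pbasis (?v, [be])) (pmult t (pbasis (t be, [f be])) (img ?d))"
    using fb d False by (simp add: phi_pbasis Phi_Cons img_nonbl img_e)
  also have "\<dots> = pmult t (pbasis (?v, [be, f be])) (img ?d)"
    using fb by (simp add: pmult_assoc[symmetric] pb_mult)
  finally have e: "phi (pbasis (?v, [be, f be, ?d])) = pmult t (pbasis (?v, [be, f be])) (img ?d)" .
  have z: "pbasis (?v, [be, f be, ?d]) \<in> ?Id" using zero_mem[OF S be] by simp
  have p: "pend t (?v, [be, f be]) = s ?d" using d by (simp add: pend_def)
  show ?thesis
  proof (cases "border_loop Q1 s t f ?d")
    case False
    have "pmult t (pbasis (?v, [be, f be])) (img ?d) = pbasis (?v, [be, f be, ?d])"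
      using False p by (simp add: img_nonbl pb_mult)
    then show ?thesis using e z by simp
  next
    case True
    have dl: "s ?d = t ?d" using bl_basic[OF True] by simp
    have zj: "pbasis (?v, [] @ [be, f be, ?d] @ replicate j ?d) \<in> ?Id" for j
    proof (rule sandwich[OF S])
      show "valid_path Q0 Q1 s t (?v, [] @ [be, f be, ?d] @ replicate j ?d)"
        using valid_append[OF zero_valid[OF be], of "replicate j ?d"] Pp_valid[OF True, of j] dl
        by (simp add: pend_def)
      show "pbasis (pend t (?v, []), [be, f be, ?d]) \<in> ?Id" using z by simp
    qed
    have "pmult t (pbasis (?v, [be, f be])) (img ?d) =
       pbasis (?v, [] @ [be, f be, ?d] @ replicate 0 ?d) + K (mu2 ?d) * pbasis (?v, [] @ [be, f be, ?d] @ replicate 1 ?d)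
       + K (mu3 ?d) * pbasis (?v, [] @ [be, f be, ?d] @ replicate 2 ?d)"
      using p by (simp add: img_def pmult_add_right pmult_K_right pb_mult numeral_eq_Suc)
    also have "\<dots> \<in> ?Id" using zj by (intro id_add id_K)
    finally show ?thesis using e by simp
  qed
qed

lemma phi_P2: "border_loop Q1 s t f a \<Longrightarrow> phi (Pp a 2) = pmult t (img a) (img a)"
  by (simp add: Pp_def phi_pbasis Phi_rep2)

lemma phi_Abl:
  assumes S: "zero_rels Q1 s f \<subseteq> S" and bl: "border_loop Q1 s t f a"
  shows "phi (pbasis (s a, Apath Q1 s f m (bar Q1 s a))) - pbasis (s a, Apath Q1 s f m (bar Q1 s a))
     \<in> ideal_gen AA (pmult t) S"
proof -
  have be: "bar Q1 s a \<in> Q1" "s (bar Q1 s a) = s a" using bl_basic[OF bl] bar_props[of a] by auto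
  show ?thesis using PL_A[OF S be(1)] E_nonbl[OF bl_last(3)[OF bl]] be by (simp add: phi_pbasis)
qed

lemma phi_Bbl:
  assumes S: "zero_rels Q1 s f \<subseteq> S" and bl: "border_loop Q1 s t f a"
    and Y: "pbasis (s a, Bpath Q1 s f m (bar Q1 s a) @ [a]) \<in> ideal_gen AA (pmult t) S"
  shows "phi (pbasis (s a, Bpath Q1 s f m (bar Q1 s a))) - pbasis (s a, Bpath Q1 s f m (bar Q1 s a))
     - K (mu2 a) * pbasis (s a, Bpath Q1 s f m (bar Q1 s a) @ [a]) \<in> ideal_gen AA (pmult t) S"
proof -
  let ?B = "Bpath Q1 s f m (bar Q1 s a)" let ?Id = "ideal_gen AA (pmult t) S"
  have be: "bar Q1 s a \<in> Q1" "s (bar Q1 s a) = s a" using bl_basic[OF bl] bar_props[of a] by auto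
  have lB: "last ?B = a" using bl_last(2)[OF bl] by simp
  have a: "s a = t a" "a \<in> Q1" using bl_basic[OF bl] by auto
  have D: "phi (pbasis (s a, ?B)) - E (s a) ?B \<in> ?Id" using PL_B[OF S be(1)] be by (simp add: phi_pbasis)
  have va: "valid_path Q0 Q1 s t (s a, [a])" using a st by (metis valid_single)
  have "pmult t (pbasis (s a, ?B @ [a])) (pbasis (s a, [a])) = pbasis (s a, ?B @ [a, a])"
    using a by (simp add: pb_mult pend_def)
  moreover have "pmult t (pbasis (s a, ?B @ [a])) (pbasis (s a, [a])) \<in> ?Id"
    by (rule ideal_gen.rmult[OF A_pbasis[OF va] Y])
  ultimately have Y2: "pbasis (s a, ?B @ [a, a]) \<in> ?Id" by metis
  have "phi (pbasis (s a, ?B)) - pbasis (s a, ?B) - K (mu2 a) * pbasis (s a, ?B @ [a]) =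
      (phi (pbasis (s a, ?B)) - E (s a) ?B) + K (mu3 a) * pbasis (s a, ?B @ [a, a])"
    unfolding E_def lB by (simp add: algebra_simps)
  also have "\<dots> \<in> ?Id" using D Y2 by (intro id_add id_K)
  finally show ?thesis .
qed

end

context main_setting
begin

definition lam :: "'a \<Rightarrow> 'k" where
  "lam a = (if border_loop Q1 s t f a then b (s a) / (2 * c (bar Q1 s a)) else 0)"

definition nu3 :: "'a \<Rightarrow> 'k" where
  "nu3 a = (if border_loop Q1 s t f a then 2 * lam a * lam a else 0)"

sublocale F: mpl Q0 Q1 s t f m c b lam "\<lambda>_. 0"
  by unfold_locales (auto simp: lam_def)

sublocale G: mpl Q0 Q1 s t f m c b "\<lambda>a. - lam a" nu3
  by unfold_locales (auto simp: lam_def nu3_def)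

abbreviation JJ where "JJ \<equiv> ideal_gen AA (pmult t) (gens_I Q1 s f m c)"
abbreviation IB where "IB \<equiv> ideal_gen AA (pmult t) (gens_Ibar Q1 s t f m c b)"

lemma zI: "zero_rels Q1 s f \<subseteq> gens_I Q1 s f m c" by (auto simp: gens_I_def)
lemma zIb: "zero_rels Q1 s f \<subseteq> gens_Ibar Q1 s t f m c b" by (auto simp: gens_Ibar_def)

lemma gnb_FG: "G.gnb = F.gnb" by (simp add: fun_eq_iff F.gnb_def G.gnb_def)

lemma lam_form: "(\<lambda>p. pbasis X p - cc * pbasis Y p) = pbasis X - K cc * pbasis Y"
  by (simp add: fun_eq_iff)

lemma gnb_J: "a \<in> Q1 \<Longrightarrow> F.gnb a \<in> JJ"
  by (rule ideal_gen.base) (auto simp: gens_I_def F.gnb_def lam_form)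

lemma gnb_IB: "a \<in> Q1 \<Longrightarrow> \<not> border_loop Q1 s t f a \<Longrightarrow> F.gnb a \<in> IB"
  by (rule ideal_gen.base) (auto simp: gens_Ibar_def F.gnb_def lam_form)

lemma bl_gen_form: "border_loop Q1 s t f a \<Longrightarrow>
  (\<lambda>p. pbasis (s a, [a, a]) p - c (bar Q1 s a) * pbasis (s (bar Q1 s a), Apath Q1 s f m (bar Q1 s a)) p
       - b (s a) * pbasis (s (bar Q1 s a), Bpath Q1 s f m (bar Q1 s a)) p) =
   Pp a 2 - K (c (bar Q1 s a)) * pbasis (s a, Apath Q1 s f m (bar Q1 s a))
     - K (b (s a)) * pbasis (s a, Bpath Q1 s f m (bar Q1 s a))"
  using bar_props[of a] bl_basic[of a] by (simp add: fun_eq_iff Pp_def numeral_eq_Suc)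

lemma gnb_bl: "border_loop Q1 s t f a \<Longrightarrow>
  F.gnb a = Pp a 2 - K (c (bar Q1 s a)) * pbasis (s a, Apath Q1 s f m (bar Q1 s a))"
  using bar_props[of a] bl_basic[of a] by (simp add: F.gnb_def Pp_def numeral_eq_Suc)

lemma bl_IB: "border_loop Q1 s t f a \<Longrightarrow>
  Pp a 2 - K (c (bar Q1 s a)) * pbasis (s a, Apath Q1 s f m (bar Q1 s a))
     - K (b (s a)) * pbasis (s a, Bpath Q1 s f m (bar Q1 s a)) \<in> IB"
  by (rule ideal_gen.base) (auto simp: gens_Ibar_def bl_gen_form[symmetric] intro!: exI[of _ a])

lemma bl_J: "border_loop Q1 s t f a \<Longrightarrow>
  Pp a 2 - K (c (bar Q1 s a)) * pbasis (s a, Apath Q1 s f m (bar Q1 s a))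
     - K 0 * pbasis (s a, Bpath Q1 s f m (bar Q1 s a)) \<in> JJ"
  using gnb_J[of a] gnb_bl[of a] bl_basic[of a] by simp

lemma kb: assumes bl: "border_loop Q1 s t f a"
  shows "(K (b (s a)) :: 'v \<times> 'a list \<Rightarrow> 'k) = K (lam a) * K (c (bar Q1 s a)) + K (lam a) * K (c (bar Q1 s a))"
proof -
  have cnz: "c (bar Q1 s a) \<noteq> 0" using c_nz bar_props bl_basic[OF bl] by blast
  have "b (s a) = lam a * c (bar Q1 s a) + lam a * c (bar Q1 s a)"
    using bl cnz two by (simp add: lam_def field_simps)
  then show ?thesis by (simp add: fun_eq_iff)
qed

lemma M1_bl:
  assumes bl: "border_loop Q1 s t f a"
  shows "F.phi (Pp a 2 - K (c (bar Q1 s a)) * pbasis (s a, Apath Q1 s f m (bar Q1 s a))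
     - K (b (s a)) * pbasis (s a, Bpath Q1 s f m (bar Q1 s a))) \<in> JJ"
proof -
  let ?c = "c (bar Q1 s a)" let ?b = "b (s a)" let ?l = "lam a"
  let ?A = "pbasis (s a, Apath Q1 s f m (bar Q1 s a))" let ?B = "pbasis (s a, Bpath Q1 s f m (bar Q1 s a))"
  let ?Y = "pbasis (s a, Bpath Q1 s f m (bar Q1 s a) @ [a])"
  let ?I2 = "pmult t (F.img a) (F.img a)"
  note gc = gen_cons[OF zI bl bl_J[OF bl]]
  have D1: "?I2 - (Pp a 2 + K ?l * Pp a 3 + K ?l * Pp a 3) \<in> JJ"
    using F.sq_mod[OF bl, of "gens_I Q1 s f m c"] gc(1) by (simp add: F.P_Pp)
  have D2: "F.phi ?A - ?A \<in> JJ" by (rule F.phi_Abl[OF zI bl])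
  have D3: "F.phi ?B - ?B - K ?l * ?Y \<in> JJ" using F.phi_Bbl[OF zI bl gc(2)] by simp
  have G0: "Pp a 2 - K ?c * ?A \<in> JJ" using bl_J[OF bl] by simp
  have G3: "Pp a 3 - K ?c * ?B \<in> JJ" by (rule gc(3))
  have ph: "F.phi (Pp a 2 - K ?c * ?A - K ?b * ?B) = ?I2 - K ?c * F.phi ?A - K ?b * F.phi ?B"
    by (simp add: F.phi_diff F.phi_K Pp_def F.phi_P2[OF bl, unfolded Pp_def])
  have eq: "?I2 - K ?c * F.phi ?A - K ?b * F.phi ?B =
      (?I2 - (Pp a 2 + K ?l * Pp a 3 + K ?l * Pp a 3)) - K ?c * (F.phi ?A - ?A) - K ?b * (F.phi ?B - ?B - K ?l * ?Y)
      + (Pp a 2 - K ?c * ?A) + K ?l * (Pp a 3 - K ?c * ?B) + K ?l * (Pp a 3 - K ?c * ?B) - K ?b * (K ?l * ?Y)"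
    unfolding kb[OF bl] by (simp add: algebra_simps)
  have "?I2 - K ?c * F.phi ?A - K ?b * F.phi ?B \<in> JJ"
    unfolding eq by (insert D1 D2 D3 G0 G3 gc(2)) (assumption | rule id_add id_diff id_K)+
  then show ?thesis unfolding ph .
qed

lemma M2_bl:
  assumes bl: "border_loop Q1 s t f a"
  shows "G.phi (Pp a 2 - K (c (bar Q1 s a)) * pbasis (s a, Apath Q1 s f m (bar Q1 s a))) \<in> IB"
proof -
  let ?c = "c (bar Q1 s a)" let ?b = "b (s a)" let ?l = "lam a"
  let ?A = "pbasis (s a, Apath Q1 s f m (bar Q1 s a))" let ?B = "pbasis (s a, Bpath Q1 s f m (bar Q1 s a))"
  let ?I2 = "pmult t (G.img a) (G.img a)"
  note gc = gen_cons[OF zIb bl bl_IB[OF bl]]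
  have D1: "?I2 - (Pp a 2 + K (- ?l) * Pp a 3 + K (- ?l) * Pp a 3) \<in> IB"
    using G.sq_mod[OF bl, of "gens_Ibar Q1 s t f m c b"] gc(1) by (simp add: G.P_Pp)
  have D2: "G.phi ?A - ?A \<in> IB" by (rule G.phi_Abl[OF zIb bl])
  have G0: "Pp a 2 - K ?c * ?A - K ?b * ?B \<in> IB" by (rule bl_IB[OF bl])
  have G3: "Pp a 3 - K ?c * ?B \<in> IB" by (rule gc(3))
  have ph: "G.phi (Pp a 2 - K ?c * ?A) = ?I2 - K ?c * G.phi ?A"
    by (simp add: G.phi_diff G.phi_K Pp_def G.phi_P2[OF bl, unfolded Pp_def])
  have km: "(K (- ?l) :: 'v \<times> 'a list \<Rightarrow> 'k) = - K ?l" by (simp add: fun_eq_iff)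
  have eq: "?I2 - K ?c * G.phi ?A =
      (?I2 - (Pp a 2 + K (- ?l) * Pp a 3 + K (- ?l) * Pp a 3)) - K ?c * (G.phi ?A - ?A)
      + (Pp a 2 - K ?c * ?A - K ?b * ?B) - K ?l * (Pp a 3 - K ?c * ?B) - K ?l * (Pp a 3 - K ?c * ?B)"
    unfolding km kb[OF bl] by (simp add: algebra_simps)
  have "?I2 - K ?c * G.phi ?A \<in> IB"
    unfolding eq by (insert D1 D2 G0 G3) (assumption | rule id_add id_diff id_K)+
  then show ?thesis unfolding ph .
qed

lemma fsupp3: "fsupp (\<lambda>p. pbasis X p - c1 * pbasis Y p - c2 * pbasis Z p :: 'k)"
  unfolding fsupp_def by (rule finite_subset[of _ "{X, Y, Z}"]) (auto simp: pbasis_def)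

lemma fsupp2: "fsupp (\<lambda>p. pbasis X p - c1 * pbasis Y p :: 'k)"
  unfolding fsupp_def by (rule finite_subset[of _ "{X, Y}"]) (auto simp: pbasis_def)

lemma gens_Ibar_fsupp: "x \<in> gens_Ibar Q1 s t f m c b \<Longrightarrow> fsupp x"
  unfolding gens_Ibar_def zero_rels_def using fsupp2 fsupp3 by auto

lemma gens_I_fsupp: "x \<in> gens_I Q1 s f m c \<Longrightarrow> fsupp x"
  unfolding gens_I_def zero_rels_def using fsupp2 by auto

lemma M1: "x \<in> gens_Ibar Q1 s t f m c b \<Longrightarrow> F.phi x \<in> JJ"
proof -
  assume x: "x \<in> gens_Ibar Q1 s t f m c b"
  then consider (nb) a where "a \<in> Q1" "\<not> border_loop Q1 s t f a" "x = F.gnb a"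
    | (bl) a where "border_loop Q1 s t f a" "x = Pp a 2 - K (c (bar Q1 s a)) * pbasis (s a, Apath Q1 s f m (bar Q1 s a))
     - K (b (s a)) * pbasis (s a, Bpath Q1 s f m (bar Q1 s a))"
    | (z) be where "be \<in> Q1" "x = pbasis (s be, [be, f be, g (f be)])"
    unfolding gens_Ibar_def zero_rels_def by (auto simp: F.gnb_def lam_form bl_gen_form)
  then show ?thesis
  proof cases
    case nb then show ?thesis using F.phi_gnb[OF zI _ _ gnb_J] by simp
  next
    case bl then show ?thesis using M1_bl by simp
  next
    case z then show ?thesis using F.phi_zero_rel[OF zI] by simp
  qed
qed

lemma M2: "x \<in> gens_I Q1 s f m c \<Longrightarrow> G.phi x \<in> IB"
proof -
  assume x: "x \<in> gens_I Q1 s f m c"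
  then consider (g) a where "a \<in> Q1" "x = F.gnb a"
    | (z) be where "be \<in> Q1" "x = pbasis (s be, [be, f be, g (f be)])"
    unfolding gens_I_def zero_rels_def by (auto simp: F.gnb_def lam_form)
  then show ?thesis
  proof cases
    case g
    show ?thesis
    proof (cases "border_loop Q1 s t f a")
      case True then show ?thesis using M2_bl g gnb_bl by simp
    next
      case False then show ?thesis using G.phi_gnb[OF zIb g(1) False] gnb_IB[OF g(1) False] g gnb_FG by simp
    qed
  next
    case z then show ?thesis using G.phi_zero_rel[OF zIb] by simp
  qed
qed

lemma AA_fsupp: "x \<in> AA \<Longrightarrow> fsupp x" by (simp add: A_iff)

lemma M3: "x \<in> IB \<Longrightarrow> fsupp x \<and> F.phi x \<in> JJ"
proof (induction rule: ideal_gen.induct)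
  case (base x) then show ?case using gens_Ibar_fsupp M1 by blast
next
  case zero then show ?case using id_zero[of AA "pmult t" "gens_I Q1 s f m c"] F.phi_zero by (simp flip: zero_fun_def)
next
  case (add x y)
  have e: "(\<lambda>p. x p + y p) = x + y" by (simp add: fun_eq_iff)
  have ph: "F.phi (x + y) = F.phi x + F.phi y" using add by (intro F.phi_add) auto
  show ?case unfolding e ph using add by (intro conjI fsupp_add id_add) auto
next
  case (smult x cc)
  have m: "(\<lambda>p. cc * F.phi x p) \<in> JJ" by (rule ideal_gen.smult) (use smult in blast)
  show ?case using smult F.phi_sc[of x cc] m by simp
next
  case (lmult a x)
  show ?case using lmult F.phi_pmult[OF AA_fsupp[OF lmult(1)]] ideal_gen.lmult[OF F.phi_AA[OF lmult(1)]]
    AA_fsupp fsupp_pmult[OF AA_fsupp[OF lmult(1)]] by simp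
next
  case (rmult a x)
  show ?case using rmult F.phi_pmult[OF _ AA_fsupp[OF rmult(1)]] ideal_gen.rmult[OF F.phi_AA[OF rmult(1)]]
    AA_fsupp fsupp_pmult[OF _ AA_fsupp[OF rmult(1)]] by simp
qed

lemma M4: "x \<in> JJ \<Longrightarrow> fsupp x \<and> G.phi x \<in> IB"
proof (induction rule: ideal_gen.induct)
  case (base x) then show ?case using gens_I_fsupp M2 by blast
next
  case zero then show ?case using id_zero[of AA "pmult t" "gens_Ibar Q1 s t f m c b"] G.phi_zero by (simp flip: zero_fun_def)
next
  case (add x y)
  have e: "(\<lambda>p. x p + y p) = x + y" by (simp add: fun_eq_iff)
  have ph: "G.phi (x + y) = G.phi x + G.phi y" using add by (intro G.phi_add) auto
  show ?case unfolding e ph using add by (intro conjI fsupp_add id_add) auto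
next
  case (smult x cc)
  have m: "(\<lambda>p. cc * G.phi x p) \<in> IB" by (rule ideal_gen.smult) (use smult in blast)
  show ?case using smult G.phi_sc[of x cc] m by simp
next
  case (lmult a x)
  show ?case using lmult G.phi_pmult[OF AA_fsupp[OF lmult(1)]] ideal_gen.lmult[OF G.phi_AA[OF lmult(1)]]
    AA_fsupp fsupp_pmult[OF AA_fsupp[OF lmult(1)]] by simp
next
  case (rmult a x)
  show ?case using rmult G.phi_pmult[OF _ AA_fsupp[OF rmult(1)]] ideal_gen.rmult[OF G.phi_AA[OF rmult(1)]]
    AA_fsupp fsupp_pmult[OF _ AA_fsupp[OF rmult(1)]] by simp
qed

end

context tq_setting
begin

lemma theta_sum:
  fixes th :: "('v \<times> 'a list \<Rightarrow> 'k::field) \<Rightarrow> 'v \<times> 'a list \<Rightarrow> 'k"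
  assumes add: "\<And>x y. fsupp x \<Longrightarrow> fsupp y \<Longrightarrow> th (x + y) = th x + th y"
    and zero: "th 0 = 0"
  shows "finite T \<Longrightarrow> (\<And>i. i \<in> T \<Longrightarrow> fsupp (h i)) \<Longrightarrow> th (\<lambda>r. \<Sum>i\<in>T. h i r) = (\<lambda>r. \<Sum>i\<in>T. th (h i) r)"
proof (induction T rule: finite_induct)
  case empty then show ?case using zero by (simp add: zero_fun_def)
next
  case (insert a T)
  have e: "(\<lambda>r. \<Sum>i\<in>insert a T. h i r) = h a + (\<lambda>r. \<Sum>i\<in>T. h i r)"
    using insert by (auto simp: fun_eq_iff)
  have "th (h a + (\<lambda>r. \<Sum>i\<in>T. h i r)) = th (h a) + th (\<lambda>r. \<Sum>i\<in>T. h i r)"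
    using insert by (intro add fsupp_sum) auto
  also have "\<dots> = (\<lambda>r. \<Sum>i\<in>insert a T. th (h i) r)"
    using insert by (auto simp: fun_eq_iff)
  finally show ?case using e by simp
qed

lemma theta_id:
  fixes th :: "('v \<times> 'a list \<Rightarrow> 'k::field) \<Rightarrow> 'v \<times> 'a list \<Rightarrow> 'k"
  assumes add: "\<And>x y. fsupp x \<Longrightarrow> fsupp y \<Longrightarrow> th (x + y) = th x + th y"
    and sc: "\<And>x cc. fsupp x \<Longrightarrow> th (\<lambda>r. cc * x r) = (\<lambda>r. cc * th x r)"
    and zero: "th 0 = 0"
    and mult: "\<And>x y. fsupp x \<Longrightarrow> fsupp y \<Longrightarrow> th (pmult t x y) = pmult t (th x) (th y)"
    and AAc: "\<And>x. x \<in> AA \<Longrightarrow> th x \<in> AA"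
    and arr: "\<And>a. a \<in> Q1 \<Longrightarrow> th (pbasis (s a, [a])) - pbasis (s a, [a]) \<in> ideal_gen AA (pmult t) S"
    and vert: "\<And>v. v \<in> Q0 \<Longrightarrow> th (pbasis (v, [])) = pbasis (v, [])"
    and x: "x \<in> AA"
  shows "th x - x \<in> ideal_gen AA (pmult t) S"
proof -
  let ?Id = "ideal_gen AA (pmult t) S"
  have path: "valid_path Q0 Q1 s t (v, w) \<Longrightarrow> th (pbasis (v, w)) - pbasis (v, w) \<in> ?Id" for v w
  proof (induction w arbitrary: v)
    case Nil
    then have "v \<in> Q0" by (simp add: valid_path_def)
    then show ?case using vert ideal_gen.zero by simp
  next
    case (Cons a w)
    have a: "v = s a" "a \<in> Q1" using Cons.prems by (auto simp: valid_path_def)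
    have vw: "valid_path Q0 Q1 s t (t a, w)"
      using valid_split(2)[of v "[a]" w] Cons.prems by simp
    have va: "valid_path Q0 Q1 s t (s a, [a])" using a st by (metis valid_single)
    let ?X = "pbasis (s a, [a]) :: 'v \<times> 'a list \<Rightarrow> 'k" let ?Y = "pbasis (t a, w) :: 'v \<times> 'a list \<Rightarrow> 'k"
    have e: "(pbasis (v, a # w) :: 'v \<times> 'a list \<Rightarrow> 'k) = pmult t ?X ?Y" using a by (simp add: pb_mult)
    have th: "th (pbasis (v, a # w)) = pmult t (th ?X) (th ?Y)" using mult[of ?X ?Y] e by simp
    have d1: "pmult t (th ?X) (th ?Y - ?Y) \<in> ?Id"
      by (rule ideal_gen.lmult[OF AAc[OF A_pbasis[OF va]] Cons.IH[OF vw]])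
    have d2: "pmult t (th ?X - ?X) ?Y \<in> ?Id"
      by (rule ideal_gen.rmult[OF A_pbasis[OF vw] arr[OF a(2)]])
    have "th (pbasis (v, a # w)) - pbasis (v, a # w) = pmult t (th ?X) (th ?Y - ?Y) + pmult t (th ?X - ?X) ?Y"
      unfolding th unfolding e by (simp add: pmult_diff_left pmult_diff_right)
    also have "\<dots> \<in> ?Id" using d1 d2 by (rule id_add)
    finally show ?case .
  qed
  let ?T = "{p. x p \<noteq> 0}"
  have fT: "finite ?T" using x by (simp add: A_iff fsupp_def)
  have ex: "x = (\<lambda>r. \<Sum>p\<in>?T. x p * pbasis p r)"
    using phimap.basis_expand[OF fT, of x] by (simp add: times_fun_def)
  have "th x = (\<lambda>r. \<Sum>p\<in>?T. th (\<lambda>r. x p * pbasis p r) r)"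
    by (subst ex, rule theta_sum[OF add zero fT]) simp_all
  also have "\<dots> = (\<lambda>r. \<Sum>p\<in>?T. x p * th (pbasis p) r)" by (simp add: sc)
  finally have thx: "th x = (\<lambda>r. \<Sum>p\<in>?T. x p * th (pbasis p) r)" .
  have "th x - x = (\<lambda>r. \<Sum>p\<in>?T. x p * (th (pbasis p) - pbasis p) r)"
    by (subst (2) ex, unfold thx) (simp add: fun_eq_iff sum_subtractf algebra_simps)
  also have "\<dots> \<in> ?Id"
  proof (rule id_sum[OF fT])
    fix p assume "p \<in> ?T"
    then have "valid_path Q0 Q1 s t p" using x unfolding A_iff by (cases p) auto
    then have "th (pbasis p) - pbasis p \<in> ?Id" using path by (cases p) auto
    then show "(\<lambda>r. x p * (th (pbasis p) - pbasis p) r) \<in> ?Id" by (rule ideal_gen.smult)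
  qed
  finally show ?thesis .
qed

end

context main_setting
begin

lemma knu: "border_loop Q1 s t f a \<Longrightarrow> (K (nu3 a) :: 'v \<times> 'a list \<Rightarrow> 'k) = K (lam a) * K (lam a) + K (lam a) * K (lam a)"
  by (simp add: fun_eq_iff nu3_def)

lemma kneg: "(K (- x) :: 'v \<times> 'a list \<Rightarrow> 'k) = - K x" by (simp add: fun_eq_iff)

lemma K0: "(K 0 :: 'v \<times> 'a list \<Rightarrow> 'k) = 0" by (simp add: fun_eq_iff)

lemma FG_arr: assumes a: "a \<in> Q1"
  shows "F.phi (G.phi (pbasis (s a, [a]))) - pbasis (s a, [a]) \<in> JJ"
proof (cases "border_loop Q1 s t f a")
  case False
  then show ?thesis using id_zero
    by (simp add: G.phi_pbasis G.Phi_single G.img_nonbl F.phi_pbasis F.Phi_single F.img_nonbl)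
next
  case bl: True
  let ?l = "lam a" let ?I2 = "pmult t (F.img a) (F.img a)"
  let ?I3 = "pmult t (F.img a) (pmult t (F.img a) (F.img a))"
  note gc = gen_cons[OF zI bl bl_J[OF bl]]
  have D1: "?I2 - (Pp a 2 + K ?l * Pp a 3 + K ?l * Pp a 3) \<in> JJ"
    using F.sq_mod[OF bl, of "gens_I Q1 s f m c"] gc(1) by (simp add: F.P_Pp)
  have D3: "?I3 - Pp a 3 \<in> JJ"
    using F.cube_mod[OF bl, of "gens_I Q1 s f m c"] gc(1) by (simp add: F.P_Pp)
  have Gi: "G.phi (pbasis (s a, [a])) = Pp a 1 + K (- ?l) * Pp a 2 + K (nu3 a) * Pp a 3"
    using G.img_P[of a] by (simp add: G.phi_pbasis G.Phi_single G.P_Pp)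
  have Fi: "F.img a = Pp a 1 + K ?l * Pp a 2 + K 0 * Pp a 3" using F.img_P[of a] by (simp add: F.P_Pp)
  have P1: "pbasis (s a, [a]) = Pp a 1" by (simp add: Pp_def)
  have e1: "F.phi (Pp a 1) = F.img a" "F.phi (Pp a (Suc 0)) = F.img a" by (simp_all add: Pp_def F.phi_pbasis F.Phi_single)
  have e2: "F.phi (Pp a 2) = ?I2" by (simp add: Pp_def F.phi_pbasis F.Phi_rep2[OF bl])
  have e3: "F.phi (Pp a 3) = ?I3" by (simp add: Pp_def F.phi_pbasis F.Phi_rep3[OF bl])
  have fs: "\<And>k. fsupp (Pp a k)" by (simp add: Pp_def)
  have ph: "F.phi (G.phi (pbasis (s a, [a]))) = F.img a + K (- ?l) * ?I2 + K (nu3 a) * ?I3"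
    unfolding Gi using fs by (simp add: F.phi_add F.phi_K e1 e2 e3)
  have eq: "F.img a + K (- ?l) * ?I2 + K (nu3 a) * ?I3 - Pp a 1 =
      K (- ?l) * (?I2 - (Pp a 2 + K ?l * Pp a 3 + K ?l * Pp a 3)) + K (nu3 a) * (?I3 - Pp a 3)"
    unfolding Fi kneg knu[OF bl] K0 by (simp add: algebra_simps)
  show ?thesis unfolding ph unfolding P1 unfolding eq using D1 D3 by (intro id_add id_K)
qed

lemma GF_arr: assumes a: "a \<in> Q1"
  shows "G.phi (F.phi (pbasis (s a, [a]))) - pbasis (s a, [a]) \<in> IB"
proof (cases "border_loop Q1 s t f a")
  case False
  then show ?thesis using id_zero
    by (simp add: G.phi_pbasis G.Phi_single G.img_nonbl F.phi_pbasis F.Phi_single F.img_nonbl)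
next
  case bl: True
  let ?l = "lam a" let ?I2 = "pmult t (G.img a) (G.img a)"
  let ?I3 = "pmult t (G.img a) (pmult t (G.img a) (G.img a))"
  note gc = gen_cons[OF zIb bl bl_IB[OF bl]]
  have D1: "?I2 - (Pp a 2 + K (- ?l) * Pp a 3 + K (- ?l) * Pp a 3) \<in> IB"
    using G.sq_mod[OF bl, of "gens_Ibar Q1 s t f m c b"] gc(1) by (simp add: G.P_Pp)
  have Fi: "F.phi (pbasis (s a, [a])) = Pp a 1 + K ?l * Pp a 2 + K 0 * Pp a 3"
    using F.img_P[of a] by (simp add: F.phi_pbasis F.Phi_single F.P_Pp)
  have Gi: "G.img a = Pp a 1 + K (- ?l) * Pp a 2 + K (nu3 a) * Pp a 3" using G.img_P[of a] by (simp add: G.P_Pp)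
  have P1: "pbasis (s a, [a]) = Pp a 1" by (simp add: Pp_def)
  have e1: "G.phi (Pp a 1) = G.img a" "G.phi (Pp a (Suc 0)) = G.img a" by (simp_all add: Pp_def G.phi_pbasis G.Phi_single)
  have e2: "G.phi (Pp a 2) = ?I2" by (simp add: Pp_def G.phi_pbasis G.Phi_rep2[OF bl])
  have fs: "\<And>k. fsupp (Pp a k)" by (simp add: Pp_def)
  have ph: "G.phi (F.phi (pbasis (s a, [a]))) = G.img a + K ?l * ?I2"
    unfolding Fi K0 using fs by (simp add: G.phi_add G.phi_K e1 e2 G.phi_zero)
  have eq: "G.img a + K ?l * ?I2 - Pp a 1 =
      K ?l * (?I2 - (Pp a 2 + K (- ?l) * Pp a 3 + K (- ?l) * Pp a 3))"
    unfolding Gi kneg knu[OF bl] by (simp add: algebra_simps)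
  show ?thesis unfolding ph unfolding P1 unfolding eq using D1 by (intro id_K)
qed


lemma FG: "x \<in> AA \<Longrightarrow> F.phi (G.phi x) - x \<in> JJ"
proof (rule theta_id[where th = "\<lambda>x. F.phi (G.phi x)"])
  fix x y :: "'v \<times> 'a list \<Rightarrow> 'k" assume "fsupp x" "fsupp y"
  then show "F.phi (G.phi (x + y)) = F.phi (G.phi x) + F.phi (G.phi y)"
    by (simp add: G.phi_add F.phi_add G.fsupp_phi)
  show "F.phi (G.phi (pmult t x y)) = pmult t (F.phi (G.phi x)) (F.phi (G.phi y))"
    using \<open>fsupp x\<close> \<open>fsupp y\<close> by (simp add: G.phi_pmult F.phi_pmult G.fsupp_phi)
next
  fix x :: "'v \<times> 'a list \<Rightarrow> 'k" and cc assume "fsupp x"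
  then show "F.phi (G.phi (\<lambda>r. cc * x r)) = (\<lambda>r. cc * F.phi (G.phi x) r)"
    by (simp add: G.phi_sc F.phi_sc G.fsupp_phi)
next
  show "F.phi (G.phi 0) = 0" by simp
next
  fix x :: "'v \<times> 'a list \<Rightarrow> 'k" assume "x \<in> AA" then show "F.phi (G.phi x) \<in> AA" by (intro F.phi_AA G.phi_AA)
next
  fix a assume "a \<in> Q1" then show "F.phi (G.phi (pbasis (s a, [a]))) - pbasis (s a, [a]) \<in> JJ"
    by (rule FG_arr)
next
  fix v show "F.phi (G.phi (pbasis (v, []))) = pbasis (v, [])"
    by (simp add: G.phi_pbasis F.phi_pbasis)
qed

lemma GF: "x \<in> AA \<Longrightarrow> G.phi (F.phi x) - x \<in> IB"
proof (rule theta_id[where th = "\<lambda>x. G.phi (F.phi x)"])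
  fix x y :: "'v \<times> 'a list \<Rightarrow> 'k" assume "fsupp x" "fsupp y"
  then show "G.phi (F.phi (x + y)) = G.phi (F.phi x) + G.phi (F.phi y)"
    by (simp add: G.phi_add F.phi_add F.fsupp_phi)
  show "G.phi (F.phi (pmult t x y)) = pmult t (G.phi (F.phi x)) (G.phi (F.phi y))"
    using \<open>fsupp x\<close> \<open>fsupp y\<close> by (simp add: G.phi_pmult F.phi_pmult F.fsupp_phi)
next
  fix x :: "'v \<times> 'a list \<Rightarrow> 'k" and cc assume "fsupp x"
  then show "G.phi (F.phi (\<lambda>r. cc * x r)) = (\<lambda>r. cc * G.phi (F.phi x) r)"
    by (simp add: G.phi_sc F.phi_sc F.fsupp_phi)
next
  show "G.phi (F.phi 0) = 0" by simp
next
  fix x :: "'v \<times> 'a list \<Rightarrow> 'k" assume "x \<in> AA" then show "G.phi (F.phi x) \<in> AA" by (intro F.phi_AA G.phi_AA)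
next
  fix a assume "a \<in> Q1" then show "G.phi (F.phi (pbasis (s a, [a]))) - pbasis (s a, [a]) \<in> IB"
    by (rule GF_arr)
next
  fix v show "G.phi (F.phi (pbasis (v, []))) = pbasis (v, [])"
    by (simp add: G.phi_pbasis F.phi_pbasis)
qed

lemma main_iso: "quot_alg_iso AA (pmult t) (punit Q0) IB JJ"
  unfolding quot_alg_iso_def
proof (intro exI[of _ F.phi] conjI ballI allI)
  fix x :: "'v \<times> 'a list \<Rightarrow> 'k" assume "x \<in> AA" then show "F.phi x \<in> AA" by (rule F.phi_AA)
next
  fix x y :: "'v \<times> 'a list \<Rightarrow> 'k" assume "x \<in> AA" "y \<in> AA"
  then have "F.phi (x + y) = F.phi x + F.phi y" by (intro F.phi_add AA_fsupp)
  then show "F.phi (\<lambda>p. x p + y p) = (\<lambda>p. F.phi x p + F.phi y p)" by (simp add: plus_fun_def)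
next
  fix cc and x :: "'v \<times> 'a list \<Rightarrow> 'k" assume "x \<in> AA" then show "F.phi (\<lambda>p. cc * x p) = (\<lambda>p. cc * F.phi x p)"
    by (intro F.phi_sc AA_fsupp)
next
  fix x y :: "'v \<times> 'a list \<Rightarrow> 'k" assume "x \<in> AA" "y \<in> AA"
  then have "F.phi (pmult t x y) = pmult t (F.phi x) (F.phi y)" by (intro F.phi_pmult AA_fsupp)
  then show "(\<lambda>p. F.phi (pmult t x y) p - pmult t (F.phi x) (F.phi y) p) \<in> JJ"
    using ideal_gen.zero by simp
next
  show "(\<lambda>p. F.phi (punit Q0) p - punit Q0 p) \<in> JJ"
    using ideal_gen.zero F.phi_unit[OF fin0] by simp
next
  fix x :: "'v \<times> 'a list \<Rightarrow> 'k" assume x: "x \<in> AA"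
  show "F.phi x \<in> JJ \<longleftrightarrow> x \<in> IB"
  proof
    assume "F.phi x \<in> JJ"
    then have "G.phi (F.phi x) \<in> IB" using M4 by blast
    then show "x \<in> IB" using mem_from_diff'[OF GF[OF x]] by blast
  next
    assume "x \<in> IB" then show "F.phi x \<in> JJ" using M3 by blast
  qed
next
  fix y :: "'v \<times> 'a list \<Rightarrow> 'k" assume y: "y \<in> AA"
  show "\<exists>x\<in>AA. (\<lambda>p. F.phi x p - y p) \<in> JJ"
  proof (intro bexI)
    show "G.phi y \<in> AA" using y by (rule G.phi_AA)
    show "(\<lambda>p. F.phi (G.phi y) p - y p) \<in> JJ" using FG[OF y] by (simp add: fun_diff_def)
  qed
qed

end

theorem proposition8p2:
  fixes Q0 :: "'v set" and Q1 :: "'a set" and s t :: "'a \<Rightarrow> 'v" and f :: "'a \<Rightarrow> 'a"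
    and m :: "'a \<Rightarrow> nat" and c :: "'a \<Rightarrow> 'k::field" and b :: "'v \<Rightarrow> 'k"
  assumes alg_closed: "\<forall>p :: 'k poly. 0 < degree p \<longrightarrow> (\<exists>x. poly p x = 0)"
    and char_not_2: "(2::'k) \<noteq> 0"
    and tq: "triangulation_quiver Q0 Q1 s t f"
    and three: "card Q0 \<ge> 3"
    and border: "border_vertices Q1 s t f \<noteq> {}"
    and wm: "weight_function Q1 s f m"
    and pc: "parameter_function Q1 s f c"
    and mn: "\<forall>a\<in>Q1. m a * orbsize Q1 s f a \<ge> 3"
  shows "quot_alg_iso (path_alg Q0 Q1 s t) (pmult t) (punit Q0)
           (idealIbar Q0 Q1 s t f m c b) (idealI Q0 Q1 s t f m c)"
proof -
  interpret main_setting Q0 Q1 s t f m c b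
    by unfold_locales (use tq char_not_2 three wm pc mn in auto)
  show ?thesis unfolding idealIbar_def idealI_def by (rule main_iso)
qed

end
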